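(* Let $T=([p],E)$ be an undirected tree and let $e=u-v$ be a non-leaf edge of $T$. Let $T_u,T_v$ be the trees obtained by deleting $e$, taking the connected components $T'_u\ni u$ and $T'_v\ni v$, and adding $e$ back to each. Let $Q=\{\operatorname{parting}(\mathcal{T},e):\mathcal{T}\in\mathrm{meq}(T)\}\subseteq\mathrm{meq}(T_u)\times\mathrm{meq}(T_v)$. Then $I_T=I_{T_u}\times_QI_{T_v}$, where the variable $z_{\mathcal{T}}$ of the ambient ring of $I_T$ is identified with the variable $z_{\operatorname{parting}(\mathcal{T},e)}$ of $\mathbb{K}[z_q:q\in Q]$.
   Context: A DAG $\mathcal{G}$ on $[p]$ has parent sets $\mathrm{pa}_{\mathcal{G}}(i)=\{j: j\to i\}$. Its characteristic imset $c_{\mathcal{G}}$ assigns to each $S\subseteq[p]$, $|S|\ge2$, the value $1$ if some $i\in S$ has $S\setminus\{i\}\subseteq\mathrm{pa}_{\mathcal{G}}(i)$, and $0$ otherwise. A v-structure is a triple $i\to j\leftarrow k$ with $i,k$ non-adjacent. The pattern of $\mathcal{G}$ is the partially directed graph obtained by undirecting every edge not belonging to a v-structure; two DAGs are Markov equivalent iff they have the same pattern (equivalently the same skeleton and v-structures, equivalently the same characteristic imset). For an undirected graph $G$, $\mathrm{meq}(G)$ is the set of patterns of DAGs with skeleton $G$; for $\mathcal{P}\in\mathrm{meq}(G)$ fix a DAG $\mathcal{G}(\mathcal{P})$ with that pattern. The characteristic imset ideal $I_G$ is the kernel of $\psi_G:\mathbb{K}[z_{\mathcal{P}}:\mathcal{P}\in\mathrm{meq}(G)]\to\mathbb{K}[t_S:S\subseteq[p],|S|\ge2]$,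 $z_{\mathcal{P}}\mapsto\prod_{S:c_{\mathcal{G}(\mathcal{P})}(S)=1}t_S$. A non-leaf edge is an edge neither of whose endpoints is a leaf. For $\mathcal{T}\in\mathrm{meq}(T)$, $\operatorname{parting}(\mathcal{T},e)=(\mathcal{T}_u,\mathcal{T}_v)$ where $\mathcal{T}_u,\mathcal{T}_v$ are the induced partially directed subgraphs of $\mathcal{T}$ on the vertex sets of $T_u,T_v$, with the edge $e$ modified as follows: if $u\to v$ in $\mathcal{T}$ then $u\to v$ in $\mathcal{T}_v$ and $u-v$ in $\mathcal{T}_u$; if $v\to u$ in $\mathcal{T}$ then $v\to u$ in $\mathcal{T}_u$ and $u-v$ in $\mathcal{T}_v$; if $u-v$ in $\mathcal{T}$ then $u-v$ in both. The ideals $I_{T_u}\subseteq\mathbb{K}[x_{\mathcal{P}}:\mathcal{P}\in\mathrm{meq}(T_u)]$ and $I_{T_v}\subseteq\mathbb{K}[y_{\mathcal{P}}:\mathcal{P}\in\mathrm{meq}(T_v)]$. For $Q\subseteq R_1\times R_2$, $\phi_Q:\mathbb{K}[z_{(a,b)}:(a,b)\in Q]\to\mathbb{K}[x_a,y_b]$ is $z_{(a,b)}\mapsto x_ay_b$ and $I\times_QJ:=\phi_Q^{-1}(I+J)$. *)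

theory Defs
  imports Main "HOL-Library.Poly_Mapping"
begin

definition adj :: "nat set set \<Rightarrow> (nat \<times> nat) set" where
  "adj E = {(x, y). {x, y} \<in> E \<and> x \<noteq> y}"

definition is_tree :: "nat set \<Rightarrow> nat set set \<Rightarrow> bool" where
  "is_tree V E \<longleftrightarrow> finite V \<and> V \<noteq> {} \<and>
     (\<forall>f\<in>E. f \<subseteq> V \<and> card f = 2) \<and>
     (\<forall>x\<in>V. \<forall>y\<in>V. (x, y) \<in> (adj E)\<^sup>*) \<and>
     card E + 1 = card V"

definition degree :: "nat set set \<Rightarrow> nat \<Rightarrow> nat" where
  "degree E x = card {y. {x, y} \<in> E \<and> y \<noteq> x}"

definition is_leaf :: "nat set set \<Rightarrow> nat \<Rightarrow> bool" where
  "is_leaf E x \<longleftrightarrow> degree E x = 1"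

definition non_leaf_edge :: "nat set set \<Rightarrow> nat \<Rightarrow> nat \<Rightarrow> bool" where
  "non_leaf_edge E u v \<longleftrightarrow> {u, v} \<in> E \<and> u \<noteq> v \<and> \<not> is_leaf E u \<and> \<not> is_leaf E v"

definition component :: "nat set \<Rightarrow> nat set set \<Rightarrow> nat \<Rightarrow> nat set" where
  "component V E x = {y\<in>V. (x, y) \<in> (adj E)\<^sup>*}"

text \<open>T_u: the component of u in T - e, with e = u - v added back
  (vertex set and edge set).\<close>
definition side_vertices :: "nat set \<Rightarrow> nat set set \<Rightarrow> nat \<Rightarrow> nat \<Rightarrow> nat set" where
  "side_vertices V E u v = component V (E - {{u, v}}) u \<union> {v}"

definition side_edges :: "nat set \<Rightarrow> nat set set \<Rightarrow> nat \<Rightarrow> nat \<Rightarrow> nat set set" where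
  "side_edges V E u v =
     {f \<in> E - {{u, v}}. f \<subseteq> component V (E - {{u, v}}) u} \<union> {{u, v}}"

text \<open>A DAG on V is a set of arrows (i, j), meaning i \<rightarrow> j.\<close>
definition is_dag :: "nat set \<Rightarrow> (nat \<times> nat) set \<Rightarrow> bool" where
  "is_dag V D \<longleftrightarrow> D \<subseteq> V \<times> V \<and> acyclic D"

definition skeleton :: "(nat \<times> nat) set \<Rightarrow> nat set set" where
  "skeleton D = {{i, j} | i j. (i, j) \<in> D}"

definition parents :: "(nat \<times> nat) set \<Rightarrow> nat \<Rightarrow> nat set" where
  "parents D i = {j. (j, i) \<in> D}"

definition adjacent :: "(nat \<times> nat) set \<Rightarrow> nat \<Rightarrow> nat \<Rightarrow> bool" where
  "adjacent D i k \<longleftrightarrow> (i, k) \<in> D \<or> (k, i) \<in> D"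

definition v_structure :: "(nat \<times> nat) set \<Rightarrow> nat \<Rightarrow> nat \<Rightarrow> nat \<Rightarrow> bool" where
  "v_structure D i j k \<longleftrightarrow> (i, j) \<in> D \<and> (k, j) \<in> D \<and> i \<noteq> k \<and> \<not> adjacent D i k"

definition in_v_structure :: "(nat \<times> nat) set \<Rightarrow> nat \<Rightarrow> nat \<Rightarrow> bool" where
  "in_v_structure D i j \<longleftrightarrow> (\<exists>k. v_structure D i j k \<or> v_structure D k j i)"

text \<open>A partially directed graph: (directed edges, undirected edges).\<close>
type_synonym pdg = "(nat \<times> nat) set \<times> nat set set"

definition pattern :: "(nat \<times> nat) set \<Rightarrow> pdg" where
  "pattern D = ({(i, j) \<in> D. in_v_structure D i j},
                {{i, j} | i j. (i, j) \<in> D \<and> \<not> in_v_structure D i j})"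

definition meq :: "nat set \<Rightarrow> nat set set \<Rightarrow> pdg set" where
  "meq V E = {pattern D | D. is_dag V D \<and> skeleton D = E}"

definition rep_dag :: "nat set \<Rightarrow> nat set set \<Rightarrow> pdg \<Rightarrow> (nat \<times> nat) set" where
  "rep_dag V E P = (SOME D. is_dag V D \<and> skeleton D = E \<and> pattern D = P)"

text \<open>Characteristic imset c_D(S) = 1 (as a predicate), for S \<subseteq> V with |S| \<ge> 2.\<close>
definition char_imset :: "(nat \<times> nat) set \<Rightarrow> nat set \<Rightarrow> bool" where
  "char_imset D S \<longleftrightarrow> (\<exists>i\<in>S. S - {i} \<subseteq> parents D i)"

text \<open>Polynomials over a field in variables of type 'v: finitely supported maps
  from monomials (finitely supported exponent vectors) to coefficients.\<close>
type_synonym ('v, 'k) mpoly = "('v \<Rightarrow>\<^sub>0 nat) \<Rightarrow>\<^sub>0 'k"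

definition vars :: "('v, 'k::zero) mpoly \<Rightarrow> 'v set" where
  "vars f = (\<Union>m\<in>Poly_Mapping.keys f. Poly_Mapping.keys m)"

definition poly_ring :: "'v set \<Rightarrow> ('v, 'k::zero) mpoly set" where
  "poly_ring W = {f. vars f \<subseteq> W}"

definition var :: "'v \<Rightarrow> ('v, 'k::{zero,one}) mpoly" where
  "var x = Poly_Mapping.single (Poly_Mapping.single x 1) 1"

text \<open>The K-algebra homomorphism sending each variable x to the monomial sigma x.\<close>
definition mono_exp :: "('v \<Rightarrow> ('w \<Rightarrow>\<^sub>0 nat)) \<Rightarrow> ('v \<Rightarrow>\<^sub>0 nat) \<Rightarrow> ('w \<Rightarrow>\<^sub>0 nat)" where
  "mono_exp \<sigma> m = (\<Sum>x\<in>Poly_Mapping.keys m. \<Sum>i<Poly_Mapping.lookup m x. \<sigma> x)"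

definition mono_map :: "('v \<Rightarrow> ('w \<Rightarrow>\<^sub>0 nat)) \<Rightarrow> ('v, 'k::comm_ring_1) mpoly \<Rightarrow> ('w, 'k) mpoly" where
  "mono_map \<sigma> f = (\<Sum>m\<in>Poly_Mapping.keys f.
       Poly_Mapping.single (mono_exp \<sigma> m) (Poly_Mapping.lookup f m))"

definition ideal_gen_in :: "'a::comm_ring_1 set \<Rightarrow> 'a set \<Rightarrow> 'a set" where
  "ideal_gen_in R X = {f. \<exists>F h. finite F \<and> F \<subseteq> X \<and> (\<forall>g\<in>F. h g \<in> R) \<and>
                              f = (\<Sum>g\<in>F. h g * g)}"

text \<open>psi_G: z_P \<mapsto> prod of t_S over S with c_{G(P)}(S) = 1.\<close>
definition psi_mono :: "nat set \<Rightarrow> nat set set \<Rightarrow> pdg \<Rightarrow> (nat set \<Rightarrow>\<^sub>0 nat)" where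
  "psi_mono V E P = (\<Sum>S\<in>{S. S \<subseteq> V \<and> 2 \<le> card S \<and> char_imset (rep_dag V E P) S}.
                        Poly_Mapping.single S 1)"

definition char_imset_ideal :: "nat set \<Rightarrow> nat set set \<Rightarrow> (pdg, 'k::field) mpoly set" where
  "char_imset_ideal V E =
     {f \<in> poly_ring (meq V E). mono_map (psi_mono V E) f = 0}"

definition restrict_pdg :: "nat set \<Rightarrow> nat \<Rightarrow> nat \<Rightarrow> pdg \<Rightarrow> pdg" where
  "restrict_pdg W x y P =
     ({(a, b) \<in> fst P. a \<in> W \<and> b \<in> W} - {(x, y)},
      {f \<in> snd P. f \<subseteq> W} \<union> (if (x, y) \<in> fst P then {{x, y}} else {}))"

definition parting :: "nat set \<Rightarrow> nat set set \<Rightarrow> nat \<Rightarrow> nat \<Rightarrow> pdg \<Rightarrow> pdg \<times> pdg" where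
  "parting V E u v P =
     (restrict_pdg (side_vertices V E u v) u v P,
      restrict_pdg (side_vertices V E v u) v u P)"

text \<open>I \<times>_Q J = phi_Q^{-1}(I + J), where I + J is the ideal of
  K[x_a, y_b : a \<in> A, b \<in> B] generated by I and J (x_a = Inl a, y_b = Inr b).\<close>
definition toric_fiber_product ::
  "('a \<times> 'b) set \<Rightarrow> 'a set \<Rightarrow> 'b set \<Rightarrow> ('a, 'k::field) mpoly set \<Rightarrow> ('b, 'k) mpoly set
     \<Rightarrow> ('a \<times> 'b, 'k) mpoly set" where
  "toric_fiber_product Q A B I J =
     {f \<in> poly_ring Q.
        mono_map (\<lambda>(a, b). Poly_Mapping.single (Inl a) 1 + Poly_Mapping.single (Inr b) 1) f
        \<in> ideal_gen_in (poly_ring (Inl ` A \<union> Inr ` B))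
             (mono_map (\<lambda>a. Poly_Mapping.single (Inl a) 1) ` I \<union>
              mono_map (\<lambda>b. Poly_Mapping.single (Inr b) 1) ` J)}"

end

theory Submission
  imports Defs
begin


lemma lookup_mono_exp:
  "Poly_Mapping.lookup (mono_exp \<sigma> m) w =
     (\<Sum>x\<in>Poly_Mapping.keys m. Poly_Mapping.lookup m x * Poly_Mapping.lookup (\<sigma> x) w)"
  unfolding mono_exp_def by (simp add: lookup_sum)

lemma lookup_mono_exp_gen:
  assumes "finite K" "Poly_Mapping.keys m \<subseteq> K"
  shows "Poly_Mapping.lookup (mono_exp \<sigma> m) w =
     (\<Sum>x\<in>K. Poly_Mapping.lookup m x * Poly_Mapping.lookup (\<sigma> x) w)"
  unfolding lookup_mono_exp
  by (rule sum.mono_neutral_left) (use assms in \<open>auto simp: in_keys_iff\<close>)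

lemma mono_exp_add: "mono_exp \<sigma> (a + b) = mono_exp \<sigma> a + mono_exp \<sigma> b"
proof (rule poly_mapping_eqI)
  fix w
  let ?K = "Poly_Mapping.keys a \<union> Poly_Mapping.keys b"
  have f: "finite ?K" by simp
  have "Poly_Mapping.keys (a + b) \<subseteq> ?K" by (rule keys_add)
  then show "Poly_Mapping.lookup (mono_exp \<sigma> (a + b)) w = Poly_Mapping.lookup (mono_exp \<sigma> a + mono_exp \<sigma> b) w"
    by (simp add: lookup_add lookup_mono_exp_gen[OF f] algebra_simps sum.distrib)
qed

lemma mono_exp_zero[simp]: "mono_exp \<sigma> 0 = 0"
  unfolding mono_exp_def by simp

lemma mono_exp_single1[simp]: "mono_exp \<sigma> (Poly_Mapping.single x 1) = \<sigma> x"
  unfolding mono_exp_def by simp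

lemma mono_exp_fun_add:
  "mono_exp (\<lambda>x. \<sigma>1 x + \<sigma>2 x) m = mono_exp \<sigma>1 m + mono_exp \<sigma>2 m"
  by (rule poly_mapping_eqI) (simp add: lookup_add lookup_mono_exp algebra_simps sum.distrib)

lemma keys_mono_exp:
  "Poly_Mapping.keys (mono_exp \<sigma> m) \<subseteq> (\<Union>x\<in>Poly_Mapping.keys m. Poly_Mapping.keys (\<sigma> x))"
proof
  fix w assume "w \<in> Poly_Mapping.keys (mono_exp \<sigma> m)"
  then have "(\<Sum>x\<in>Poly_Mapping.keys m. Poly_Mapping.lookup m x * Poly_Mapping.lookup (\<sigma> x) w) \<noteq> 0"
    by (simp add: in_keys_iff lookup_mono_exp)
  then obtain x where "x \<in> Poly_Mapping.keys m" "Poly_Mapping.lookup m x * Poly_Mapping.lookup (\<sigma> x) w \<noteq> 0"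
    by (meson sum.not_neutral_contains_not_neutral)
  then show "w \<in> (\<Union>x\<in>Poly_Mapping.keys m. Poly_Mapping.keys (\<sigma> x))"
    by (auto simp: in_keys_iff)
qed

lemma mono_exp_compose:
  "mono_exp \<sigma>2 (mono_exp \<sigma>1 m) = mono_exp (\<lambda>x. mono_exp \<sigma>2 (\<sigma>1 x)) m"
proof (rule poly_mapping_eqI)
  fix w
  let ?K = "\<Union>x\<in>Poly_Mapping.keys m. Poly_Mapping.keys (\<sigma>1 x)"
  have f: "finite ?K" by simp
  have "Poly_Mapping.lookup (mono_exp \<sigma>2 (mono_exp \<sigma>1 m)) w =
     (\<Sum>y\<in>?K. Poly_Mapping.lookup (mono_exp \<sigma>1 m) y * Poly_Mapping.lookup (\<sigma>2 y) w)"
    by (rule lookup_mono_exp_gen[OF f keys_mono_exp])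
  also have "\<dots> = (\<Sum>y\<in>?K. \<Sum>x\<in>Poly_Mapping.keys m. Poly_Mapping.lookup m x * Poly_Mapping.lookup (\<sigma>1 x) y * Poly_Mapping.lookup (\<sigma>2 y) w)"
    by (simp add: lookup_mono_exp sum_distrib_right)
  also have "\<dots> = (\<Sum>x\<in>Poly_Mapping.keys m. \<Sum>y\<in>?K. Poly_Mapping.lookup m x * Poly_Mapping.lookup (\<sigma>1 x) y * Poly_Mapping.lookup (\<sigma>2 y) w)"
    by (rule sum.swap)
  also have "\<dots> = (\<Sum>x\<in>Poly_Mapping.keys m. Poly_Mapping.lookup m x * Poly_Mapping.lookup (mono_exp \<sigma>2 (\<sigma>1 x)) w)"
  proof (rule sum.cong[OF refl])
    fix x assume x: "x \<in> Poly_Mapping.keys m"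
    have "Poly_Mapping.lookup (mono_exp \<sigma>2 (\<sigma>1 x)) w = (\<Sum>y\<in>?K. Poly_Mapping.lookup (\<sigma>1 x) y * Poly_Mapping.lookup (\<sigma>2 y) w)"
      by (rule lookup_mono_exp_gen[OF f]) (use x in auto)
    then show "(\<Sum>y\<in>?K. Poly_Mapping.lookup m x * Poly_Mapping.lookup (\<sigma>1 x) y * Poly_Mapping.lookup (\<sigma>2 y) w) =
        Poly_Mapping.lookup m x * Poly_Mapping.lookup (mono_exp \<sigma>2 (\<sigma>1 x)) w"
      by (simp add: sum_distrib_left mult.assoc)
  qed
  also have "\<dots> = Poly_Mapping.lookup (mono_exp (\<lambda>x. mono_exp \<sigma>2 (\<sigma>1 x)) m) w"
    by (simp add: lookup_mono_exp)
  finally show "Poly_Mapping.lookup (mono_exp \<sigma>2 (mono_exp \<sigma>1 m)) w = Poly_Mapping.lookup (mono_exp (\<lambda>x. mono_exp \<sigma>2 (\<sigma>1 x)) m) w" .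
qed

lemma mono_exp_id: "mono_exp (\<lambda>x. Poly_Mapping.single x 1) m = m"
proof (rule poly_mapping_eqI)
  fix k
  have "(\<Sum>x\<in>Poly_Mapping.keys m. Poly_Mapping.lookup m x * (if x = k then Suc 0 else 0)) =
        (\<Sum>x\<in>Poly_Mapping.keys m. if x = k then Poly_Mapping.lookup m x else 0)"
    by (rule sum.cong) auto
  also have "\<dots> = Poly_Mapping.lookup m k" by (simp add: sum.delta' in_keys_iff)
  finally show "Poly_Mapping.lookup (mono_exp (\<lambda>x. Poly_Mapping.single x 1) m) k = Poly_Mapping.lookup m k"
    by (simp add: lookup_mono_exp lookup_single when_def)
qed

lemma mono_map_gen:
  assumes "finite K" "Poly_Mapping.keys f \<subseteq> K"
  shows "mono_map \<sigma> f = (\<Sum>m\<in>K. Poly_Mapping.single (mono_exp \<sigma> m) (Poly_Mapping.lookup f m))"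
  unfolding mono_map_def
  by (rule sum.mono_neutral_left) (use assms in \<open>auto simp: in_keys_iff\<close>)

lemma mono_map_add: "mono_map \<sigma> (f + g) = mono_map \<sigma> f + mono_map \<sigma> g"
proof -
  let ?K = "Poly_Mapping.keys f \<union> Poly_Mapping.keys g"
  have f: "finite ?K" by simp
  have "Poly_Mapping.keys (f + g) \<subseteq> ?K" by (rule keys_add)
  then show ?thesis
    by (simp add: mono_map_gen[OF f] lookup_add single_add sum.distrib)
qed

lemma mono_map_zero[simp]: "mono_map \<sigma> 0 = 0"
  unfolding mono_map_def by simp

lemma mono_map_uminus: "mono_map \<sigma> (- f) = - mono_map \<sigma> f"
  by (metis add.right_inverse add_eq_0_iff mono_map_add mono_map_zero)

lemma mono_map_diff: "mono_map \<sigma> (f - g) = mono_map \<sigma> f - mono_map \<sigma> g"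
  by (metis diff_conv_add_uminus mono_map_add mono_map_uminus)

lemma mono_map_single: "mono_map \<sigma> (Poly_Mapping.single m c) = Poly_Mapping.single (mono_exp \<sigma> m) c"
  unfolding mono_map_def by (cases "c = 0") auto

lemma mono_map_sum: "mono_map \<sigma> (sum h A) = (\<Sum>a\<in>A. mono_map \<sigma> (h a))"
  by (induction A rule: infinite_finite_induct) (auto simp: mono_map_add)

lemma poly_expand: "f = (\<Sum>m\<in>Poly_Mapping.keys f. Poly_Mapping.single m (Poly_Mapping.lookup f m))"
proof (rule poly_mapping_eqI)
  fix k
  have "(\<Sum>m\<in>Poly_Mapping.keys f. Poly_Mapping.lookup (Poly_Mapping.single m (Poly_Mapping.lookup f m)) k)
      = (\<Sum>m\<in>Poly_Mapping.keys f. if m = k then Poly_Mapping.lookup f m else 0)"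
    by (rule sum.cong) (auto simp: lookup_single when_def)
  also have "\<dots> = Poly_Mapping.lookup f k" by (simp add: sum.delta' in_keys_iff)
  finally show "Poly_Mapping.lookup f k = Poly_Mapping.lookup (\<Sum>m\<in>Poly_Mapping.keys f. Poly_Mapping.single m (Poly_Mapping.lookup f m)) k"
    by (simp add: lookup_sum)
qed

lemma mono_map_compose:
  "mono_map \<sigma>2 (mono_map \<sigma>1 f) = mono_map (\<lambda>x. mono_exp \<sigma>2 (\<sigma>1 x)) f"
proof -
  have "mono_map \<sigma>2 (mono_map \<sigma>1 f) = mono_map \<sigma>2 (\<Sum>m\<in>Poly_Mapping.keys f. Poly_Mapping.single (mono_exp \<sigma>1 m) (Poly_Mapping.lookup f m))"
    by (simp only: mono_map_def)
  also have "\<dots> = (\<Sum>m\<in>Poly_Mapping.keys f. Poly_Mapping.single (mono_exp \<sigma>2 (mono_exp \<sigma>1 m)) (Poly_Mapping.lookup f m))"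
    by (simp only: mono_map_sum mono_map_single)
  also have "\<dots> = mono_map (\<lambda>x. mono_exp \<sigma>2 (\<sigma>1 x)) f"
    by (simp only: mono_map_def mono_exp_compose)
  finally show ?thesis .
qed

lemma mono_map_mult:
  "mono_map \<sigma> (f * g) = mono_map \<sigma> f * mono_map \<sigma> (g::('v,'k::comm_ring_1) mpoly)"
proof -
  have "f * g = (\<Sum>a\<in>Poly_Mapping.keys f. Poly_Mapping.single a (Poly_Mapping.lookup f a)) *
                (\<Sum>b\<in>Poly_Mapping.keys g. Poly_Mapping.single b (Poly_Mapping.lookup g b))"
    by (subst poly_expand[of f], subst poly_expand[of g]) (rule refl)
  also have "\<dots> = (\<Sum>a\<in>Poly_Mapping.keys f. \<Sum>b\<in>Poly_Mapping.keys g.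
       Poly_Mapping.single (a + b) (Poly_Mapping.lookup f a * Poly_Mapping.lookup g b))"
    by (simp add: sum_product mult_single)
  finally have fg: "f * g = \<dots>" .
  have "mono_map \<sigma> f * mono_map \<sigma> g = (\<Sum>a\<in>Poly_Mapping.keys f. Poly_Mapping.single (mono_exp \<sigma> a) (Poly_Mapping.lookup f a)) *
                (\<Sum>b\<in>Poly_Mapping.keys g. Poly_Mapping.single (mono_exp \<sigma> b) (Poly_Mapping.lookup g b))"
    by (simp add: mono_map_def)
  also have "\<dots> = (\<Sum>a\<in>Poly_Mapping.keys f. \<Sum>b\<in>Poly_Mapping.keys g.
       Poly_Mapping.single (mono_exp \<sigma> a + mono_exp \<sigma> b) (Poly_Mapping.lookup f a * Poly_Mapping.lookup g b))"
    by (simp add: sum_product mult_single)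
  finally show ?thesis
    by (simp add: fg mono_map_sum mono_map_single mono_exp_add)
qed

lemma lookup_mono_map:
  "Poly_Mapping.lookup (mono_map \<sigma> f) n =
     (\<Sum>m\<in>{m\<in>Poly_Mapping.keys f. mono_exp \<sigma> m = n}. Poly_Mapping.lookup f m)"
  unfolding mono_map_def lookup_sum
  by (simp add: lookup_single when_def sum.inter_filter)

lemma vars_single: "vars (Poly_Mapping.single m c) \<subseteq> Poly_Mapping.keys m"
  by (auto simp: vars_def split: if_splits)

lemma vars_add: "vars (f + g) \<subseteq> vars f \<union> vars g"
  unfolding vars_def using keys_add[of f g] by blast

lemma vars_uminus[simp]: "vars (- f) = vars (f::('v,'k::ab_group_add) mpoly)"
  unfolding vars_def by simp

lemma vars_diff: "vars (f - g) \<subseteq> vars f \<union> vars (g::('v,'k::ab_group_add) mpoly)"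
  using vars_add[of f "-g"] by simp

lemma vars_mult: "vars (f * g) \<subseteq> vars f \<union> vars (g::('v,'k::comm_ring_1) mpoly)"
proof
  fix x assume "x \<in> vars (f * g)"
  then obtain m where m: "m \<in> Poly_Mapping.keys (f * g)" "x \<in> Poly_Mapping.keys m"
    unfolding vars_def by blast
  then obtain a b where "m = a + b" "a \<in> Poly_Mapping.keys f" "b \<in> Poly_Mapping.keys g"
    using keys_mult[of f g] by blast
  with m(2) keys_add[of a b] show "x \<in> vars f \<union> vars g"
    unfolding vars_def by blast
qed

lemma vars_sum: "vars (sum h A) \<subseteq> (\<Union>a\<in>A. vars (h a))"
  unfolding vars_def using keys_sum[of h A] by blast

lemma vars_mono_map: "vars (mono_map \<sigma> f) \<subseteq> (\<Union>x\<in>vars f. Poly_Mapping.keys (\<sigma> x))"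
proof -
  have "vars (mono_map \<sigma> f) \<subseteq> (\<Union>m\<in>Poly_Mapping.keys f. vars (Poly_Mapping.single (mono_exp \<sigma> m) (Poly_Mapping.lookup f m)))"
    unfolding mono_map_def by (rule vars_sum)
  also have "\<dots> \<subseteq> (\<Union>m\<in>Poly_Mapping.keys f. Poly_Mapping.keys (mono_exp \<sigma> m))"
    by (rule UN_mono[OF order.refl vars_single])
  also have "\<dots> \<subseteq> (\<Union>m\<in>Poly_Mapping.keys f. \<Union>x\<in>Poly_Mapping.keys m. Poly_Mapping.keys (\<sigma> x))"
    by (rule UN_mono[OF order.refl keys_mono_exp])
  also have "\<dots> = (\<Union>x\<in>vars f. Poly_Mapping.keys (\<sigma> x))"
    unfolding vars_def by auto
  finally show ?thesis .
qed

lemma pr_add: "f \<in> poly_ring W \<Longrightarrow> g \<in> poly_ring W \<Longrightarrow> f + g \<in> poly_ring W"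
  unfolding poly_ring_def using vars_add[of f g] by auto
lemma pr_diff: "f \<in> poly_ring W \<Longrightarrow> g \<in> poly_ring W \<Longrightarrow> f - (g::('v,'k::ab_group_add) mpoly) \<in> poly_ring W"
  unfolding poly_ring_def using vars_diff[of f g] by auto
lemma pr_uminus: "f \<in> poly_ring W \<Longrightarrow> - (f::('v,'k::ab_group_add) mpoly) \<in> poly_ring W"
  unfolding poly_ring_def by simp
lemma pr_mult: "f \<in> poly_ring W \<Longrightarrow> g \<in> poly_ring W \<Longrightarrow> f * (g::('v,'k::comm_ring_1) mpoly) \<in> poly_ring W"
  unfolding poly_ring_def using vars_mult[of f g] by auto
lemma pr_single: "Poly_Mapping.keys m \<subseteq> W \<Longrightarrow> Poly_Mapping.single m c \<in> poly_ring W"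
  unfolding poly_ring_def using vars_single[of m c] by auto
lemma pr_one: "(1::('v,'k::comm_ring_1) mpoly) \<in> poly_ring W"
  using pr_single[of 0 W "1::'k"] by simp
lemma pr_sum: "(\<And>a. a \<in> A \<Longrightarrow> h a \<in> poly_ring W) \<Longrightarrow> sum h A \<in> poly_ring W"
  unfolding poly_ring_def using vars_sum[of h A] by force

lemma ideal_memI:
  "finite F \<Longrightarrow> F \<subseteq> X \<Longrightarrow> (\<And>g. g \<in> F \<Longrightarrow> h g \<in> R) \<Longrightarrow> f = (\<Sum>g\<in>F. h g * g) \<Longrightarrow> f \<in> ideal_gen_in R X"
  unfolding ideal_gen_in_def mem_Collect_eq by (intro exI[of _ F] exI[of _ h]) simp

lemma ideal_memE:
  assumes "f \<in> ideal_gen_in R X"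
  obtains F h where "finite F" "F \<subseteq> X" "\<And>g. g \<in> F \<Longrightarrow> h g \<in> R" "f = (\<Sum>g\<in>F. h g * g)"
  using assms unfolding ideal_gen_in_def mem_Collect_eq by metis

lemma ideal_zero: "0 \<in> ideal_gen_in R X"
  by (rule ideal_memI[where F="{}" and h="\<lambda>_. 0"]) auto

lemma ideal_gen:
  assumes "g \<in> X" shows "g \<in> ideal_gen_in (poly_ring W) (X::('v,'k::comm_ring_1) mpoly set)"
  by (rule ideal_memI[where F="{g}" and h="\<lambda>_. 1"]) (use assms pr_one in auto)

lemma ideal_add:
  assumes "a \<in> ideal_gen_in R X" "b \<in> ideal_gen_in R X"
    and R0: "0 \<in> R" and Radd: "\<And>x y. x \<in> R \<Longrightarrow> y \<in> R \<Longrightarrow> x + y \<in> R"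
  shows "a + b \<in> ideal_gen_in R X"
proof -
  obtain F1 h1 where 1: "finite F1" "F1 \<subseteq> X" "\<And>g. g\<in>F1 \<Longrightarrow> h1 g \<in> R" "a = (\<Sum>g\<in>F1. h1 g * g)"
    using assms(1) by (metis ideal_memE)
  obtain F2 h2 where 2: "finite F2" "F2 \<subseteq> X" "\<And>g. g\<in>F2 \<Longrightarrow> h2 g \<in> R" "b = (\<Sum>g\<in>F2. h2 g * g)"
    using assms(2) by (metis ideal_memE)
  define h where "h g = (if g \<in> F1 then h1 g else 0) + (if g \<in> F2 then h2 g else 0)" for g
  have e1: "(\<Sum>g\<in>F1 \<union> F2. (if g \<in> F1 then h1 g else 0) * g) = a"
  proof -
    have "(\<Sum>g\<in>F1 \<union> F2. (if g \<in> F1 then h1 g else 0) * g) = (\<Sum>g\<in>F1. (if g \<in> F1 then h1 g else 0) * g)"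
      by (rule sum.mono_neutral_right) (use 1 2 in auto)
    also have "\<dots> = a" using 1 by simp
    finally show ?thesis .
  qed
  have e2: "(\<Sum>g\<in>F1 \<union> F2. (if g \<in> F2 then h2 g else 0) * g) = b"
  proof -
    have "(\<Sum>g\<in>F1 \<union> F2. (if g \<in> F2 then h2 g else 0) * g) = (\<Sum>g\<in>F2. (if g \<in> F2 then h2 g else 0) * g)"
      by (rule sum.mono_neutral_right) (use 1 2 in auto)
    also have "\<dots> = b" using 2 by simp
    finally show ?thesis .
  qed
  have "(\<Sum>g\<in>F1 \<union> F2. h g * g) = a + b"
    unfolding h_def distrib_right sum.distrib e1 e2 ..
  moreover have "h g \<in> R" if "g \<in> F1 \<union> F2" for g
    unfolding h_def by (intro Radd) (auto intro: 1(3) 2(3) R0)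
  ultimately show ?thesis
    by (intro ideal_memI[where F="F1 \<union> F2" and h=h]) (use 1 2 in auto)
qed

lemma ideal_mult:
  assumes "a \<in> ideal_gen_in R X" "r \<in> R"
    and Rmult: "\<And>x y. x \<in> R \<Longrightarrow> y \<in> R \<Longrightarrow> x * y \<in> R"
  shows "r * a \<in> ideal_gen_in R X"
proof -
  obtain F1 h1 where 1: "finite F1" "F1 \<subseteq> X" "\<And>g. g\<in>F1 \<Longrightarrow> h1 g \<in> R" "a = (\<Sum>g\<in>F1. h1 g * g)"
    using assms(1) by (metis ideal_memE)
  have "r * a = (\<Sum>g\<in>F1. (r * h1 g) * g)"
    using 1 by (simp add: sum_distrib_left mult.assoc)
  then show ?thesis
    by (intro ideal_memI[where F=F1 and h="\<lambda>g. r * h1 g"]) (use 1 assms in auto)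
qed

lemma pr_zero: "0 \<in> poly_ring W"
  unfolding poly_ring_def vars_def by simp

lemma pideal_add: "a \<in> ideal_gen_in (poly_ring W) X \<Longrightarrow> b \<in> ideal_gen_in (poly_ring W) X \<Longrightarrow>
   a + b \<in> ideal_gen_in (poly_ring W) (X::('v,'k::comm_ring_1) mpoly set)"
  by (rule ideal_add) (auto simp: pr_add pr_zero)

lemma pideal_mult: "a \<in> ideal_gen_in (poly_ring W) X \<Longrightarrow> r \<in> poly_ring W \<Longrightarrow>
   r * a \<in> ideal_gen_in (poly_ring W) (X::('v,'k::comm_ring_1) mpoly set)"
  by (rule ideal_mult) (auto simp: pr_mult)

lemma pideal_diff: "a \<in> ideal_gen_in (poly_ring W) X \<Longrightarrow> b \<in> ideal_gen_in (poly_ring W) X \<Longrightarrow>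
   a - b \<in> ideal_gen_in (poly_ring W) (X::('v,'k::comm_ring_1) mpoly set)"
  by (metis pideal_add[of a W X "(-1) * b"] pideal_mult[of b W X "-1"] pr_uminus[OF pr_one] diff_conv_add_uminus mult_minus1)

lemma pideal_sum: "(\<And>a. a \<in> A \<Longrightarrow> h a \<in> ideal_gen_in (poly_ring W) X) \<Longrightarrow>
   sum h A \<in> ideal_gen_in (poly_ring W) (X::('v,'k::comm_ring_1) mpoly set)"
  by (induction A rule: infinite_finite_induct) (auto simp: ideal_zero pideal_add)

lemma single_sum: "Poly_Mapping.single k (sum g A) = (\<Sum>a\<in>A. Poly_Mapping.single k (g a))"
  by (induction A rule: infinite_finite_induct) (auto simp: single_add)

lemma kernel_binomial:
  fixes f :: "('v, 'k::comm_ring_1) mpoly"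
  assumes ker: "mono_map \<sigma> f = 0"
    and bin: "\<And>m m'. m \<in> Poly_Mapping.keys f \<Longrightarrow> m' \<in> Poly_Mapping.keys f \<Longrightarrow> mono_exp \<sigma> m = mono_exp \<sigma> m' \<Longrightarrow>
        Poly_Mapping.single (mono_exp \<mu> m) (1::'k) - Poly_Mapping.single (mono_exp \<mu> m') 1 \<in> ideal_gen_in (poly_ring W) X"
  shows "mono_map \<mu> f \<in> ideal_gen_in (poly_ring W) X"
proof -
  define r where "r n = (SOME m. m \<in> Poly_Mapping.keys f \<and> mono_exp \<sigma> m = n)" for n
  have r: "r (mono_exp \<sigma> m) \<in> Poly_Mapping.keys f \<and> mono_exp \<sigma> (r (mono_exp \<sigma> m)) = mono_exp \<sigma> m"
    if "m \<in> Poly_Mapping.keys f" for m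
    unfolding r_def by (rule someI[of _ m]) (use that in auto)
  define G where "G n = mono_exp \<mu> (r n)" for n
  let ?K = "Poly_Mapping.keys f"
  have "(\<Sum>m\<in>?K. Poly_Mapping.single (G (mono_exp \<sigma> m)) (Poly_Mapping.lookup f m))
     = (\<Sum>n\<in>mono_exp \<sigma> ` ?K. \<Sum>m\<in>{m\<in>?K. mono_exp \<sigma> m = n}. Poly_Mapping.single (G (mono_exp \<sigma> m)) (Poly_Mapping.lookup f m))"
    by (rule sum.image_gen) simp
  also have "\<dots> = (\<Sum>n\<in>mono_exp \<sigma> ` ?K. \<Sum>m\<in>{m\<in>?K. mono_exp \<sigma> m = n}. Poly_Mapping.single (G n) (Poly_Mapping.lookup f m))"
    by (intro sum.cong refl) auto
  also have "\<dots> = (\<Sum>n\<in>mono_exp \<sigma> ` ?K. Poly_Mapping.single (G n) (Poly_Mapping.lookup (mono_map \<sigma> f) n))"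
    by (simp add: lookup_mono_map single_sum)
  also have "\<dots> = 0" by (simp add: ker)
  finally have z: "(\<Sum>m\<in>?K. Poly_Mapping.single (G (mono_exp \<sigma> m)) (Poly_Mapping.lookup f m)) = 0" .
  have "mono_map \<mu> f = (\<Sum>m\<in>?K. Poly_Mapping.single (mono_exp \<mu> m) (Poly_Mapping.lookup f m))"
    by (simp add: mono_map_def)
  also have "\<dots> = (\<Sum>m\<in>?K. Poly_Mapping.single 0 (Poly_Mapping.lookup f m) *
        (Poly_Mapping.single (mono_exp \<mu> m) 1 - Poly_Mapping.single (G (mono_exp \<sigma> m)) 1))
      + (\<Sum>m\<in>?K. Poly_Mapping.single (G (mono_exp \<sigma> m)) (Poly_Mapping.lookup f m))"
    by (simp add: sum.distrib[symmetric] right_diff_distrib mult_single)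
  also have "\<dots> = (\<Sum>m\<in>?K. Poly_Mapping.single 0 (Poly_Mapping.lookup f m) *
        (Poly_Mapping.single (mono_exp \<mu> m) 1 - Poly_Mapping.single (G (mono_exp \<sigma> m)) 1))"
    by (simp add: z)
  finally have eq: "mono_map \<mu> f = \<dots>" .
  show ?thesis unfolding eq
  proof (rule pideal_sum)
    fix m assume m: "m \<in> ?K"
    show "Poly_Mapping.single 0 (Poly_Mapping.lookup f m) *
        (Poly_Mapping.single (mono_exp \<mu> m) 1 - Poly_Mapping.single (G (mono_exp \<sigma> m)) 1) \<in> ideal_gen_in (poly_ring W) X"
      unfolding G_def
      by (rule pideal_mult[OF bin pr_single]) (use r[OF m] m in auto)
  qed
qed

lemma kernel_transfer:
  fixes g :: "('v, 'k::comm_ring_1) mpoly"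
  assumes ker: "mono_map \<sigma>' g = 0"
    and iff: "\<And>m m'. m \<in> Poly_Mapping.keys g \<Longrightarrow> m' \<in> Poly_Mapping.keys g \<Longrightarrow>
        mono_exp \<sigma>' m = mono_exp \<sigma>' m' \<longleftrightarrow> mono_exp \<sigma> m = mono_exp \<sigma> m'"
  shows "mono_map \<sigma> g = 0"
proof (rule poly_mapping_eqI)
  fix n
  show "Poly_Mapping.lookup (mono_map \<sigma> g) n = Poly_Mapping.lookup 0 n"
  proof (cases "\<exists>m0\<in>Poly_Mapping.keys g. mono_exp \<sigma> m0 = n")
    case False
    then have e: "{m\<in>Poly_Mapping.keys g. mono_exp \<sigma> m = n} = {}" by auto
    show ?thesis by (simp only: lookup_mono_map e sum.empty lookup_zero)
  next
    case True
    then obtain m0 where m0: "m0 \<in> Poly_Mapping.keys g" "mono_exp \<sigma> m0 = n" by blast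
    have "{m\<in>Poly_Mapping.keys g. mono_exp \<sigma> m = n} = {m\<in>Poly_Mapping.keys g. mono_exp \<sigma>' m = mono_exp \<sigma>' m0}"
      using iff m0 by auto
    then have "Poly_Mapping.lookup (mono_map \<sigma> g) n = Poly_Mapping.lookup (mono_map \<sigma>' g) (mono_exp \<sigma>' m0)"
      by (simp add: lookup_mono_map)
    then show ?thesis by (simp add: ker)
  qed
qed

lemma mono_exp_cong: "(\<And>x. x \<in> Poly_Mapping.keys m \<Longrightarrow> \<sigma> x = \<tau> x) \<Longrightarrow> mono_exp \<sigma> m = mono_exp \<tau> m"
  unfolding mono_exp_def by (rule sum.cong) auto

lemma mono_map_cong: "(\<And>x. x \<in> vars f \<Longrightarrow> \<sigma> x = \<tau> x) \<Longrightarrow> mono_map \<sigma> f = mono_map \<tau> f"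
  unfolding mono_map_def vars_def
  by (rule sum.cong[OF refl], rule arg_cong2[where f = Poly_Mapping.single], rule mono_exp_cong) auto

lemma mono_map_id: "mono_map (\<lambda>x. Poly_Mapping.single x 1) f = f"
  unfolding mono_map_def mono_exp_id by (rule poly_expand[symmetric])

lemma mono_exp_restrict:
  assumes "\<And>x. x \<in> Poly_Mapping.keys m \<Longrightarrow> Poly_Mapping.lookup (\<tau> x) S = (if S \<in> A then Poly_Mapping.lookup (\<sigma> x) S else 0)"
  shows "Poly_Mapping.lookup (mono_exp \<tau> m) S = (if S \<in> A then Poly_Mapping.lookup (mono_exp \<sigma> m) S else 0)"
  unfolding lookup_mono_exp using assms by (cases "S \<in> A") auto

lemma ideal_killed:
  assumes "h \<in> ideal_gen_in R X" "\<And>x. x \<in> X \<Longrightarrow> mono_map \<theta> x = 0"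
  shows "mono_map \<theta> (h::('v,'k::comm_ring_1) mpoly) = 0"
proof -
  obtain F hh where F: "F \<subseteq> X" "h = (\<Sum>g\<in>F. hh g * g)"
    using assms(1) by (metis ideal_memE)
  show ?thesis unfolding F(2) mono_map_sum mono_map_mult using F(1) assms(2) by (simp add: subset_iff)
qed




lemma sym_adj: "sym (adj F)"
  unfolding adj_def sym_def by (auto simp: insert_commute)

lemma rtrancl_adj_sym: "(x, y) \<in> (adj F)\<^sup>* \<Longrightarrow> (y, x) \<in> (adj F)\<^sup>*"
  using sym_rtrancl[OF sym_adj] by (auto dest: symD)

lemma connected_card:
  assumes fin: "finite F" and conn: "\<And>x. x \<in> V \<Longrightarrow> (x, r) \<in> (adj F)\<^sup>*"
    and finV: "finite V"
  shows "card V \<le> card F + 1"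
proof -
  let ?R = "adj F"
  define d where "d x = (LEAST n. (x, r) \<in> ?R ^^ n)" for x
  have dI: "(x, r) \<in> ?R ^^ d x" if xV: "x \<in> V" for x
  proof -
    obtain n where "(x, r) \<in> ?R ^^ n" using conn[OF xV] rtrancl_power by blast
    then show ?thesis unfolding d_def by (rule LeastI)
  qed
  have dle: "d x \<le> n" if "(x, r) \<in> ?R ^^ n" for x n
    unfolding d_def using that by (rule Least_le)
  have nb: "\<exists>y. (x, y) \<in> ?R \<and> Suc (d y) = d x" if x: "x \<in> V" "x \<noteq> r" for x
  proof -
    have "d x \<noteq> 0" using dI[OF x(1)] x(2) by (cases "d x") auto
    then obtain k where k: "d x = Suc k" by (cases "d x") auto
    then obtain y where y: "(x, y) \<in> ?R" "(y, r) \<in> ?R ^^ k"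
      using dI[OF x(1)] relpow_Suc_D2 by metis
    have "d y \<le> k" using dle[OF y(2)] .
    moreover have "(x, r) \<in> ?R ^^ Suc (d y)"
    proof -
      have "(y, r) \<in> ?R ^^ d y" unfolding d_def using y(2) by (rule LeastI)
      then show ?thesis using y(1) relpow_Suc_I2 by metis
    qed
    then have "d x \<le> Suc (d y)" by (rule dle)
    ultimately show ?thesis using y(1) k by (intro exI[of _ y]) auto
  qed
  define nbr where "nbr x = (SOME y. (x, y) \<in> ?R \<and> Suc (d y) = d x)" for x
  have nbr: "(x, nbr x) \<in> ?R \<and> Suc (d (nbr x)) = d x" if "x \<in> V" "x \<noteq> r" for x
    unfolding nbr_def using nb[OF that] by (rule someI_ex)
  define h where "h x = {x, nbr x}" for x
  have "inj_on h (V - {r})"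
  proof (rule inj_onI)
    fix x x' assume x: "x \<in> V - {r}" and x': "x' \<in> V - {r}" and eq: "h x = h x'"
    show "x = x'"
    proof (rule ccontr)
      assume ne: "x \<noteq> x'"
      from eq ne have "x = nbr x'" "x' = nbr x" unfolding h_def by (auto simp: doubleton_eq_iff)
      moreover have "Suc (d (nbr x)) = d x" "Suc (d (nbr x')) = d x'" using nbr[of x] nbr[of x'] x x' by auto
      ultimately show False by auto
    qed
  qed
  moreover have "h ` (V - {r}) \<subseteq> F"
  proof
    fix f assume "f \<in> h ` (V - {r})"
    then obtain x where x: "x \<in> V" "x \<noteq> r" "f = h x" by blast
    show "f \<in> F" using nbr[OF x(1,2)] x(3) unfolding h_def adj_def by simp
  qed
  ultimately have "card (V - {r}) \<le> card F"
    using card_inj_on_le fin by blast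
  moreover have "card V \<le> card (V - {r}) + 1"
  proof (cases "r \<in> V")
    case True
    then have "card V > 0" using finV card_gt_0_iff by blast
    then show ?thesis using True by (simp add: card_Diff_singleton_if)
  qed simp
  ultimately show ?thesis by linarith
qed

lemma tree_finE: "is_tree V E \<Longrightarrow> finite E"
  unfolding is_tree_def by (meson Pow_iff finite_Pow_iff finite_subset subsetI)

lemma tree_edge_sub: "is_tree V E \<Longrightarrow> f \<in> E \<Longrightarrow> f \<subseteq> V"
  unfolding is_tree_def by blast

lemma tree_bridge:
  assumes T: "is_tree V E" and e: "{a, b} \<in> E" "a \<noteq> b"
  shows "(a, b) \<notin> (adj (E - {{a, b}}))\<^sup>*"
proof
  assume ab: "(a, b) \<in> (adj (E - {{a, b}}))\<^sup>*"
  let ?E' = "E - {{a, b}}"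
  have ba: "(b, a) \<in> (adj ?E')\<^sup>*" using ab by (rule rtrancl_adj_sym)
  have "adj E \<subseteq> (adj ?E')\<^sup>*"
  proof
    fix z assume "z \<in> adj E"
    then obtain x y where z: "z = (x, y)" "{x, y} \<in> E" "x \<noteq> y" unfolding adj_def by auto
    show "z \<in> (adj ?E')\<^sup>*"
    proof (cases "{x, y} = {a, b}")
      case True
      then have "(x = a \<and> y = b) \<or> (x = b \<and> y = a)" by (auto simp: doubleton_eq_iff)
      then show ?thesis using ab ba z by auto
    next
      case False
      then have "(x, y) \<in> adj ?E'" using z unfolding adj_def by auto
      then show ?thesis using z by auto
    qed
  qed
  then have sub: "(adj E)\<^sup>* \<subseteq> (adj ?E')\<^sup>*" by (rule rtrancl_subset_rtrancl)
  from T have finV: "finite V" and ne: "V \<noteq> {}" and conn: "\<forall>x\<in>V. \<forall>y\<in>V. (x, y) \<in> (adj E)\<^sup>*"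
    and cE: "card E + 1 = card V" unfolding is_tree_def by auto
  obtain r where r: "r \<in> V" using ne by blast
  have "card V \<le> card ?E' + 1"
    by (rule connected_card[of _ _ r]) (use tree_finE[OF T] conn r sub finV in auto)
  moreover have "card ?E' = card E - 1" using e tree_finE[OF T] by simp
  moreover have "card E \<ge> 1" using e tree_finE[OF T] by (metis One_nat_def Suc_leI card_gt_0_iff empty_iff)
  ultimately show False using cE by linarith
qed

lemma tree_triangle_free:
  assumes T: "is_tree V E" and "{a, b} \<in> E" "{b, c} \<in> E" "{a, c} \<in> E" "a \<noteq> b" "b \<noteq> c" "a \<noteq> c"
  shows False
proof -
  have "(a, c) \<in> adj (E - {{a, b}})" using assms unfolding adj_def by (auto simp: doubleton_eq_iff)
  moreover have "(c, b) \<in> adj (E - {{a, b}})" using assms unfolding adj_def by (auto simp: doubleton_eq_iff insert_commute)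
  ultimately have "(a, b) \<in> (adj (E - {{a, b}}))\<^sup>*" by (meson converse_rtrancl_into_rtrancl r_into_rtrancl)
  then show False using tree_bridge[OF T assms(2,5)] by blast
qed

lemma dag_irrefl: "is_dag W D \<Longrightarrow> (a, b) \<in> D \<Longrightarrow> a \<noteq> b"
  unfolding is_dag_def acyclic_def by auto

lemma dag_asym: "is_dag W D \<Longrightarrow> (a, b) \<in> D \<Longrightarrow> (b, a) \<notin> D"
  unfolding is_dag_def acyclic_def by (meson trancl.simps)

lemma skel_edge: "skeleton D = F \<Longrightarrow> (a, b) \<in> D \<Longrightarrow> {a, b} \<in> F"
  unfolding skeleton_def by auto

lemma skel_edgeD: "skeleton D = F \<Longrightarrow> {a, b} \<in> F \<Longrightarrow> (a, b) \<in> D \<or> (b, a) \<in> D"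
  unfolding skeleton_def by (auto simp: doubleton_eq_iff)

lemma fst_pattern: "fst (pattern D) = {(i, j) \<in> D. in_v_structure D i j}"
  unfolding pattern_def by simp

definition tri_free :: "nat set set \<Rightarrow> bool" where
  "tri_free F \<longleftrightarrow> (\<forall>a b c. {a, b} \<in> F \<longrightarrow> {b, c} \<in> F \<longrightarrow> {a, c} \<in> F \<longrightarrow> a \<noteq> b \<longrightarrow> b \<noteq> c \<longrightarrow> a \<noteq> c \<longrightarrow> False)"

lemma tree_tri_free: "is_tree V E \<Longrightarrow> tri_free E"
  unfolding tri_free_def using tree_triangle_free by blast

lemma tri_free_mono: "tri_free E \<Longrightarrow> F \<subseteq> E \<Longrightarrow> tri_free F"
  unfolding tri_free_def by blast

lemma char_imset_tree:
  assumes dag: "is_dag W D" and sk: "skeleton D = F" and tf: "tri_free F" and card: "2 \<le> card S"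
  shows "char_imset D S \<longleftrightarrow> (card S = 2 \<and> S \<in> F) \<or>
           (3 \<le> card S \<and> (\<exists>i\<in>S. \<forall>j\<in>S - {i}. (j, i) \<in> fst (pattern D)))"
proof (cases "card S = 2")
  case True
  then obtain a b where S: "S = {a, b}" "a \<noteq> b" by (meson card_2_iff)
  have "char_imset D S \<longleftrightarrow> (b, a) \<in> D \<or> (a, b) \<in> D"
    unfolding S char_imset_def parents_def using S(2) by auto
  also have "\<dots> \<longleftrightarrow> S \<in> F"
    using skel_edge[OF sk, of a b] skel_edge[OF sk, of b a] skel_edgeD[OF sk, of a b] S
    by (auto simp: insert_commute)
  finally show ?thesis using True by simp
next
  case False
  with card have c3: "3 \<le> card S" by simp
  have fin: "finite S" using card card.infinite by fastforce
  have "char_imset D S \<longleftrightarrow> (\<exists>i\<in>S. \<forall>j\<in>S - {i}. (j, i) \<in> fst (pattern D))"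
  proof
    assume "char_imset D S"
    then obtain i where i: "i \<in> S" "S - {i} \<subseteq> parents D i" unfolding char_imset_def by blast
    have "\<forall>j\<in>S - {i}. (j, i) \<in> fst (pattern D)"
    proof
      fix j assume j: "j \<in> S - {i}"
      have "card (S - {i} - {j}) \<ge> 1" using c3 fin i(1) j by (simp add: card_Diff_singleton_if)
      then obtain k where k: "k \<in> S - {i} - {j}" by (metis card.empty empty_iff not_one_le_zero subsetI subset_antisym)
      have ji: "(j, i) \<in> D" and ki: "(k, i) \<in> D" using i(2) j k unfolding parents_def by auto
      have "\<not> adjacent D j k"
      proof
        assume "adjacent D j k"
        then have "{j, k} \<in> F" using skel_edge[OF sk, of j k] skel_edge[OF sk, of k j]
          unfolding adjacent_def by (auto simp: insert_commute)
        moreover have "{j, i} \<in> F" using skel_edge[OF sk ji] .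
        moreover have "{i, k} \<in> F" using skel_edge[OF sk ki] by (simp add: insert_commute)
        ultimately show False using tf j k unfolding tri_free_def by blast
      qed
      then have "v_structure D j i k" unfolding v_structure_def using ji ki k by auto
      then show "(j, i) \<in> fst (pattern D)" unfolding fst_pattern in_v_structure_def using ji by auto
    qed
    then show "\<exists>i\<in>S. \<forall>j\<in>S - {i}. (j, i) \<in> fst (pattern D)" using i(1) by blast
  next
    assume "\<exists>i\<in>S. \<forall>j\<in>S - {i}. (j, i) \<in> fst (pattern D)"
    then obtain i where "i \<in> S" "\<forall>j\<in>S - {i}. (j, i) \<in> fst (pattern D)" by blast
    then have "S - {i} \<subseteq> parents D i" unfolding parents_def fst_pattern by auto
    then show "char_imset D S" unfolding char_imset_def using \<open>i \<in> S\<close> by blast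
  qed
  then show ?thesis using c3 False by simp
qed

lemma rep_dag_spec:
  assumes "P \<in> meq W F"
  shows "is_dag W (rep_dag W F P) \<and> skeleton (rep_dag W F P) = F \<and> pattern (rep_dag W F P) = P"
proof -
  from assms obtain D where "is_dag W D \<and> skeleton D = F \<and> pattern D = P" unfolding meq_def by blast
  then show ?thesis unfolding rep_dag_def by (rule someI)
qed

locale tree_edge =
  fixes V :: "nat set" and E :: "nat set set" and u v :: nat
  assumes T: "is_tree V E" and e: "{u, v} \<in> E" and uv: "u \<noteq> v"
begin

abbreviation "C \<equiv> component V (E - {{u, v}}) u"
abbreviation "Vs \<equiv> side_vertices V E u v"
abbreviation "Es \<equiv> side_edges V E u v"

lemma finV: "finite V" using T unfolding is_tree_def by blast

lemma uV: "u \<in> V" and vV: "v \<in> V" using tree_edge_sub[OF T e] by auto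

lemma C_sub: "C \<subseteq> V" unfolding component_def by blast

lemma u_C: "u \<in> C" unfolding component_def using uV by blast

lemma v_notin_C: "v \<notin> C"
  unfolding component_def using tree_bridge[OF T e uv] by blast

lemma Vs_eq: "Vs = C \<union> {v}" unfolding side_vertices_def ..

lemma Vs_sub: "Vs \<subseteq> V" using C_sub vV Vs_eq by blast

lemma u_Vs: "u \<in> Vs" and v_Vs: "v \<in> Vs" using u_C Vs_eq by auto

lemma N:
  assumes x: "x \<in> Vs" "x \<noteq> v" and xy: "{x, y} \<in> E"
  shows "y \<in> Vs"
proof (cases "x = y")
  case True then show ?thesis using x by simp
next
  case False
  have xC: "x \<in> C" using x Vs_eq by auto
  show ?thesis
  proof (cases "{x, y} = {u, v}")
    case True then have "y = u \<or> y = v" by (auto simp: doubleton_eq_iff)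
    then show ?thesis using u_Vs v_Vs by auto
  next
    case ne: False
    then have "(x, y) \<in> adj (E - {{u, v}})" using xy False unfolding adj_def by auto
    moreover have "(u, x) \<in> (adj (E - {{u, v}}))\<^sup>*" using xC unfolding component_def by blast
    moreover have "y \<in> V" using tree_edge_sub[OF T xy] by auto
    ultimately have "(u, y) \<in> (adj (E - {{u, v}}))\<^sup>*" "y \<in> V" by auto
    then have "y \<in> C" unfolding component_def by simp
    then show ?thesis using Vs_eq by auto
  qed
qed

lemma N2:
  assumes x: "x \<in> Vs" "x \<noteq> v" and xv: "{x, v} \<in> E"
  shows "x = u"
proof (rule ccontr)
  assume xu: "x \<noteq> u"
  have xC: "x \<in> C" using x Vs_eq by auto
  have "{x, v} \<noteq> {u, v}" using xu x(2) by (auto simp: doubleton_eq_iff)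
  then have "(x, v) \<in> adj (E - {{u, v}})" using xv x(2) unfolding adj_def by auto
  moreover have "(u, x) \<in> (adj (E - {{u, v}}))\<^sup>*" using xC unfolding component_def by blast
  ultimately have "(u, v) \<in> (adj (E - {{u, v}}))\<^sup>*" by auto
  then have "v \<in> C" using vV unfolding component_def by simp
  then show False using v_notin_C by blast
qed

lemma Es_sub: "Es \<subseteq> E" unfolding side_edges_def using e by blast

lemma Es_sub_Vs: "f \<in> Es \<Longrightarrow> f \<subseteq> Vs" unfolding side_edges_def using Vs_eq u_C by auto

lemma SK:
  assumes "a \<in> Vs" "b \<in> Vs" "a \<noteq> b"
  shows "{a, b} \<in> E \<longleftrightarrow> {a, b} \<in> Es"
proof
  assume ab: "{a, b} \<in> E"
  show "{a, b} \<in> Es"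
  proof (cases "{a, b} = {u, v}")
    case True then show ?thesis unfolding side_edges_def by auto
  next
    case False
    have "a \<noteq> v"
    proof
      assume "a = v"
      then have "b = u" using N2[of b] assms ab by (auto simp: insert_commute)
      then show False using False \<open>a = v\<close> by (auto simp: insert_commute)
    qed
    moreover have "b \<noteq> v"
    proof
      assume "b = v"
      then have "a = u" using N2[of a] assms ab by auto
      then show False using False \<open>b = v\<close> by auto
    qed
    ultimately have "{a, b} \<subseteq> C" using assms Vs_eq by auto
    then show ?thesis using ab False unfolding side_edges_def by auto
  qed
next
  assume "{a, b} \<in> Es" then show "{a, b} \<in> E" using Es_sub by blast
qed

lemma restrict_meq:
  assumes P: "P \<in> meq V E"
  shows "restrict_pdg Vs u v P \<in> meq Vs Es"
proof -
  obtain D where dag: "is_dag V D" and sk: "skeleton D = E" and PD: "P = pattern D"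
    using P unfolding meq_def by auto
  define Du where "Du = {(a, b) \<in> D. a \<in> Vs \<and> b \<in> Vs}"
  have Du_sub: "Du \<subseteq> D" unfolding Du_def by blast
  have dagu: "is_dag Vs Du"
    using dag acyclic_subset[OF _ Du_sub] unfolding is_dag_def Du_def by blast
  have edgeE: "{a, b} \<in> E" if "(a, b) \<in> D" for a b using skel_edge[OF sk that] .
  have sku: "skeleton Du = Es"
  proof
    show "skeleton Du \<subseteq> Es"
    proof
      fix f assume "f \<in> skeleton Du"
      then obtain i j where f: "f = {i, j}" "(i, j) \<in> D" "i \<in> Vs" "j \<in> Vs"
        unfolding skeleton_def Du_def by blast
      have "i \<noteq> j" using dag_irrefl[OF dag f(2)] .
      then show "f \<in> Es" using SK[OF f(3,4)] edgeE[OF f(2)] f(1) by blast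
    qed
  next
    show "Es \<subseteq> skeleton Du"
    proof
      fix f assume fE: "f \<in> Es"
      then have "f \<in> E" using Es_sub by blast
      then have "card f = 2" using T unfolding is_tree_def by blast
      then obtain a b where ab: "f = {a, b}" "a \<noteq> b" by (meson card_2_iff)
      have abV: "a \<in> Vs" "b \<in> Vs" using Es_sub_Vs[OF fE] ab by auto
      from skel_edgeD[OF sk] \<open>f \<in> E\<close> ab have "(a, b) \<in> D \<or> (b, a) \<in> D" by blast
      then show "f \<in> skeleton Du"
        unfolding skeleton_def Du_def using ab abV by (auto simp: insert_commute)
    qed
  qed
  have adj_eq: "adjacent Du x y \<longleftrightarrow> adjacent D x y" if "x \<in> Vs" "y \<in> Vs" for x y
    using that unfolding adjacent_def Du_def by auto
  have inv: "in_v_structure Du a b \<longleftrightarrow> in_v_structure D a b \<and> (a, b) \<noteq> (u, v)"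
    if ab: "(a, b) \<in> Du" for a b
  proof -
    have abD: "(a, b) \<in> D" and aV: "a \<in> Vs" and bV: "b \<in> Vs" using ab unfolding Du_def by auto
    have vs1: "v_structure Du a b k \<longleftrightarrow> v_structure D a b k \<and> (a, b) \<noteq> (u, v)"
      and vs2: "v_structure Du k b a \<longleftrightarrow> v_structure D k b a \<and> (a, b) \<noteq> (u, v)" for k
    proof -
      have kV: "k \<in> Vs" if kb: "(k, b) \<in> D" and ne: "(a, b) \<noteq> (u, v)"
      proof (cases "b = v")
        case True
        have "a \<noteq> v" using dag_irrefl[OF dag abD] True by simp
        then have "a = u" using N2[OF aV] edgeE[OF abD] True by simp
        then show ?thesis using ne True by simp
      next
        case False
        then show ?thesis using N[OF bV False] edgeE[OF kb] by (simp add: insert_commute)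
      qed
      have nuv: "(a, b) \<noteq> (u, v)" if kb: "(k, b) \<in> D" "k \<in> Vs" "k \<noteq> a" for k
      proof
        assume eq: "(a, b) = (u, v)"
        have "k \<noteq> v" using dag_irrefl[OF dag kb(1)] eq by simp
        then have "k = u" using N2[OF kb(2)] edgeE[OF kb(1)] eq by simp
        then show False using eq kb(3) by simp
      qed
      show "v_structure Du a b k \<longleftrightarrow> v_structure D a b k \<and> (a, b) \<noteq> (u, v)"
      proof
        assume vs: "v_structure Du a b k"
        then have kb: "(k, b) \<in> D" "k \<in> Vs" "k \<noteq> a" unfolding v_structure_def Du_def by auto
        then show "v_structure D a b k \<and> (a, b) \<noteq> (u, v)"
          using vs nuv[OF kb] adj_eq[OF aV kb(2)] Du_sub unfolding v_structure_def by auto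
      next
        assume vs: "v_structure D a b k \<and> (a, b) \<noteq> (u, v)"
        then have kb: "(k, b) \<in> D" unfolding v_structure_def by auto
        have kV': "k \<in> Vs" using kV[OF kb] vs by blast
        then show "v_structure Du a b k"
          using vs adj_eq[OF aV kV'] ab kb bV unfolding v_structure_def Du_def by auto
      qed
      show "v_structure Du k b a \<longleftrightarrow> v_structure D k b a \<and> (a, b) \<noteq> (u, v)"
      proof
        assume vs: "v_structure Du k b a"
        then have kb: "(k, b) \<in> D" "k \<in> Vs" "k \<noteq> a" unfolding v_structure_def Du_def by auto
        then show "v_structure D k b a \<and> (a, b) \<noteq> (u, v)"
          using vs nuv[OF kb] adj_eq[OF kb(2) aV] Du_sub unfolding v_structure_def by auto
      next
        assume vs: "v_structure D k b a \<and> (a, b) \<noteq> (u, v)"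
        then have kb: "(k, b) \<in> D" unfolding v_structure_def by auto
        have kV': "k \<in> Vs" using kV[OF kb] vs by blast
        then show "v_structure Du k b a"
          using vs adj_eq[OF kV' aV] ab kb bV unfolding v_structure_def Du_def by auto
      qed
    qed
    show ?thesis unfolding in_v_structure_def using vs1 vs2 by blast
  qed
  have fst_eq: "fst (pattern Du) = fst (restrict_pdg Vs u v (pattern D))"
  proof -
    have "fst (pattern Du) = {(a, b) \<in> Du. in_v_structure Du a b}" by (rule fst_pattern)
    also have "\<dots> = {(a, b) \<in> Du. in_v_structure D a b \<and> (a, b) \<noteq> (u, v)}" using inv by auto
    also have "\<dots> = fst (restrict_pdg Vs u v (pattern D))"
      unfolding restrict_pdg_def fst_pattern Du_def by auto
    finally show ?thesis .
  qed
  have snd_eq: "snd (pattern Du) = snd (restrict_pdg Vs u v (pattern D))"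
  proof
    show "snd (pattern Du) \<subseteq> snd (restrict_pdg Vs u v (pattern D))"
    proof
      fix f assume "f \<in> snd (pattern Du)"
      then obtain i j where f: "f = {i, j}" "(i, j) \<in> Du" "\<not> in_v_structure Du i j"
        unfolding pattern_def by auto
      have ijD: "(i, j) \<in> D" "i \<in> Vs" "j \<in> Vs" using f(2) unfolding Du_def by auto
      show "f \<in> snd (restrict_pdg Vs u v (pattern D))"
      proof (cases "in_v_structure D i j")
        case True
        then have "(i, j) = (u, v)" using inv[OF f(2)] f(3) by blast
        then show ?thesis using True ijD f(1) unfolding restrict_pdg_def fst_pattern by auto
      next
        case False
        then have "f \<in> snd (pattern D)" unfolding pattern_def using f(1) ijD(1) by auto
        then show ?thesis using f(1) ijD unfolding restrict_pdg_def by auto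
      qed
    qed
  next
    show "snd (restrict_pdg Vs u v (pattern D)) \<subseteq> snd (pattern Du)"
    proof
      fix f assume f: "f \<in> snd (restrict_pdg Vs u v (pattern D))"
      show "f \<in> snd (pattern Du)"
      proof (cases "f \<in> snd (pattern D) \<and> f \<subseteq> Vs")
        case True
        then obtain i j where ij: "f = {i, j}" "(i, j) \<in> D" "\<not> in_v_structure D i j"
          unfolding pattern_def by auto
        have "(i, j) \<in> Du" using ij True unfolding Du_def by auto
        moreover have "\<not> in_v_structure Du i j" using inv[OF \<open>(i, j) \<in> Du\<close>] ij(3) by blast
        ultimately show ?thesis unfolding pattern_def using ij(1) by auto
      next
        case False
        then have "f = {u, v}" "(u, v) \<in> D" using f unfolding restrict_pdg_def fst_pattern
          by (auto split: if_splits)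
        moreover have "(u, v) \<in> Du" using \<open>(u, v) \<in> D\<close> u_Vs v_Vs unfolding Du_def by auto
        moreover have "\<not> in_v_structure Du u v" using inv[OF \<open>(u, v) \<in> Du\<close>] by blast
        ultimately show ?thesis unfolding pattern_def by auto
      qed
    qed
  qed
  have "pattern Du = restrict_pdg Vs u v P"
    using fst_eq snd_eq unfolding PD by (simp add: prod_eq_iff)
  then show ?thesis unfolding meq_def using dagu sku by (metis (mono_tags, lifting) mem_Collect_eq)
qed

lemma char_restrict:
  assumes P: "P \<in> meq V E" and S: "S \<subseteq> Vs" and c2: "2 \<le> card S"
  shows "char_imset (rep_dag V E P) S \<longleftrightarrow> char_imset (rep_dag Vs Es (restrict_pdg Vs u v P)) S"
proof -
  let ?a = "restrict_pdg Vs u v P"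
  let ?D = "rep_dag V E P" and ?Ds = "rep_dag Vs Es ?a"
  have D: "is_dag V ?D" "skeleton ?D = E" "pattern ?D = P" using rep_dag_spec[OF P] by auto
  have Ds: "is_dag Vs ?Ds" "skeleton ?Ds = Es" "pattern ?Ds = ?a" using rep_dag_spec[OF restrict_meq[OF P]] by auto
  have tf: "tri_free E" by (rule tree_tri_free[OF T])
  have tfs: "tri_free Es" by (rule tri_free_mono[OF tf Es_sub])
  have e2: "(card S = 2 \<and> S \<in> E) \<longleftrightarrow> (card S = 2 \<and> S \<in> Es)"
  proof (cases "card S = 2")
    case True
    then obtain a b where "S = {a, b}" "a \<noteq> b" by (meson card_2_iff)
    then show ?thesis using SK[of a b] S by auto
  qed simp
  have e3: "(\<exists>i\<in>S. \<forall>j\<in>S - {i}. (j, i) \<in> fst P) \<longleftrightarrow> (\<exists>i\<in>S. \<forall>j\<in>S - {i}. (j, i) \<in> fst ?a)"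
    if c3: "3 \<le> card S"
  proof
    assume "\<exists>i\<in>S. \<forall>j\<in>S - {i}. (j, i) \<in> fst P"
    then obtain i where i: "i \<in> S" "\<forall>j\<in>S - {i}. (j, i) \<in> fst P" by blast
    have fin: "finite S" using c2 card.infinite by fastforce
    have "\<forall>j\<in>S - {i}. (j, i) \<in> fst ?a"
    proof
      fix j assume j: "j \<in> S - {i}"
      have ne: "(j, i) \<noteq> (u, v)"
      proof
        assume eq: "(j, i) = (u, v)"
        have "card (S - {i} - {j}) \<ge> 1" using c3 fin i(1) j by (simp add: card_Diff_singleton_if)
        then obtain k where k: "k \<in> S - {i} - {j}" by (metis card.empty empty_iff not_one_le_zero subsetI subset_antisym)
        have "(k, i) \<in> fst P" using i(2) k by auto
        moreover have "fst (pattern ?D) \<subseteq> ?D" unfolding fst_pattern by auto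
        ultimately have "(k, i) \<in> ?D" using D(3) by auto
        then have "{k, v} \<in> E" using skel_edge[OF D(2)] eq by auto
        moreover have "k \<in> Vs" "k \<noteq> v" using k S eq by auto
        ultimately have "k = u" using N2 by blast
        then show False using k eq by auto
      qed
      show "(j, i) \<in> fst ?a" unfolding restrict_pdg_def using i j S ne by auto
    qed
    then show "\<exists>i\<in>S. \<forall>j\<in>S - {i}. (j, i) \<in> fst ?a" using i(1) by blast
  next
    assume "\<exists>i\<in>S. \<forall>j\<in>S - {i}. (j, i) \<in> fst ?a"
    then show "\<exists>i\<in>S. \<forall>j\<in>S - {i}. (j, i) \<in> fst P" unfolding restrict_pdg_def by auto
  qed
  show ?thesis
    unfolding char_imset_tree[OF D(1,2) tf c2] char_imset_tree[OF Ds(1,2) tfs c2] D(3) Ds(3)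
    using e2 e3 by blast
qed

lemma star_side:
  assumes i: "i \<in> C" "i \<in> S" and sk: "skeleton D = E" and par: "S - {i} \<subseteq> parents D i"
  shows "S \<subseteq> Vs"
proof
  fix j assume j: "j \<in> S"
  show "j \<in> Vs"
  proof (cases "j = i")
    case True then show ?thesis using i Vs_eq by auto
  next
    case False
    then have "(j, i) \<in> D" using par j unfolding parents_def by auto
    then have "{i, j} \<in> E" using skel_edge[OF sk \<open>(j, i) \<in> D\<close>] by (simp add: insert_commute)
    moreover have "i \<in> Vs" "i \<noteq> v" using i Vs_eq v_notin_C by auto
    ultimately show ?thesis using N by blast
  qed
qed


end

lemma lookup_psi:
  assumes "finite W"
  shows "Poly_Mapping.lookup (psi_mono W F P) S =
    (if S \<subseteq> W \<and> 2 \<le> card S \<and> char_imset (rep_dag W F P) S then 1 else 0)"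
proof -
  let ?A = "{S. S \<subseteq> W \<and> 2 \<le> card S \<and> char_imset (rep_dag W F P) S}"
  have fin: "finite ?A" using assms by (rule rev_finite_subset[OF finite_Pow_iff[THEN iffD2]]) auto
  have "Poly_Mapping.lookup (psi_mono W F P) S = (\<Sum>S'\<in>?A. if S' = S then Suc 0 else 0)"
    unfolding psi_mono_def lookup_sum by (simp add: lookup_single when_def)
  also have "\<dots> = (if S \<in> ?A then 1 else 0)" using fin by (simp add: sum.delta)
  finally show ?thesis by simp
qed

lemma (in tree_edge) KL:
  assumes P: "P \<in> meq V E"
  shows "Poly_Mapping.lookup (psi_mono Vs Es (restrict_pdg Vs u v P)) S =
    (if S \<subseteq> Vs then Poly_Mapping.lookup (psi_mono V E P) S else 0)"
proof -
  have fVs: "finite Vs" using finite_subset[OF Vs_sub finV] .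
  show ?thesis
    unfolding lookup_psi[OF fVs] lookup_psi[OF finV]
    using char_restrict[OF P, of S] Vs_sub by auto
qed

lemma COV:
  assumes T: "is_tree V E" and e: "{u, v} \<in> E" and x: "x \<in> V"
  shows "x \<in> component V (E - {{u, v}}) u \<or> x \<in> component V (E - {{v, u}}) v"
proof -
  let ?R = "adj (E - {{u, v}})"
  have uV: "u \<in> V" and vV: "v \<in> V" using tree_edge_sub[OF T e] by auto
  have "(u, x) \<in> (adj E)\<^sup>*" using T x uV unfolding is_tree_def by blast
  then have "x \<in> V \<and> ((u, x) \<in> ?R\<^sup>* \<or> (v, x) \<in> ?R\<^sup>*)"
  proof (induction rule: rtrancl_induct)
    case base then show ?case using uV by auto
  next
    case (step y z)
    then have yz: "{y, z} \<in> E" "y \<noteq> z" unfolding adj_def by auto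
    have zV: "z \<in> V" using tree_edge_sub[OF T yz(1)] by auto
    show ?case
    proof (cases "{y, z} = {u, v}")
      case True
      then have "z = u \<or> z = v" by (auto simp: doubleton_eq_iff)
      then show ?thesis using zV by auto
    next
      case False
      then have "(y, z) \<in> ?R" using yz unfolding adj_def by auto
      then show ?thesis using step.IH zV by (meson rtrancl.rtrancl_into_rtrancl)
    qed
  qed
  then show ?thesis unfolding component_def by (auto simp: insert_commute)
qed

lemma keys_psi_side:
  assumes T: "is_tree V E" and e: "{u, v} \<in> E" and uv: "u \<noteq> v" and P: "P \<in> meq V E"
    and S: "S \<in> Poly_Mapping.keys (psi_mono V E P)"
  shows "S \<subseteq> side_vertices V E u v \<or> S \<subseteq> side_vertices V E v u"
proof -
  interpret U: tree_edge V E u v using T e uv by unfold_locales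
  interpret W: tree_edge V E v u using T e uv by unfold_locales (auto simp: insert_commute)
  have "S \<subseteq> V" "char_imset (rep_dag V E P) S"
    using S unfolding in_keys_iff lookup_psi[OF U.finV] by (auto split: if_splits)
  then obtain i where i: "i \<in> S" "S - {i} \<subseteq> parents (rep_dag V E P) i" "i \<in> V"
    unfolding char_imset_def by blast
  have sk: "skeleton (rep_dag V E P) = E" using rep_dag_spec[OF P] by auto
  from COV[OF T e i(3)] show ?thesis
    using U.star_side[OF _ i(1) sk i(2)] W.star_side[OF _ i(1) sk i(2)] by blast
qed




lemma keys_mono_exp_single: "Poly_Mapping.keys (mono_exp (\<lambda>x. Poly_Mapping.single (f x) (1::nat)) n) \<subseteq> f ` Poly_Mapping.keys n"
  using keys_mono_exp[of "\<lambda>x. Poly_Mapping.single (f x) (1::nat)" n] by auto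

context tree_edge begin

abbreviation "Vt \<equiv> side_vertices V E v u"
abbreviation "Et \<equiv> side_edges V E v u"
abbreviation "part \<equiv> parting V E u v"

lemma W_loc: "tree_edge V E v u"
  by unfold_locales (use T e uv in \<open>auto simp: insert_commute\<close>)

lemma part_fst: "fst (part P) = restrict_pdg Vs u v P" unfolding parting_def by simp
lemma part_snd: "snd (part P) = restrict_pdg Vt v u P" unfolding parting_def by simp

lemma part_in1: "P \<in> meq V E \<Longrightarrow> fst (part P) \<in> meq Vs Es"
  unfolding part_fst by (rule restrict_meq)
lemma part_in2: "P \<in> meq V E \<Longrightarrow> snd (part P) \<in> meq Vt Et"
  unfolding part_snd by (rule tree_edge.restrict_meq[OF W_loc])

lemma KLu: "P \<in> meq V E \<Longrightarrow> Poly_Mapping.lookup (psi_mono Vs Es (fst (part P))) S =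
    (if S \<in> Pow Vs then Poly_Mapping.lookup (psi_mono V E P) S else 0)"
  unfolding part_fst using KL by simp
lemma KLv: "P \<in> meq V E \<Longrightarrow> Poly_Mapping.lookup (psi_mono Vt Et (snd (part P))) S =
    (if S \<in> Pow Vt then Poly_Mapping.lookup (psi_mono V E P) S else 0)"
  unfolding part_snd using tree_edge.KL[OF W_loc] by simp

lemma exp_u:
  assumes "Poly_Mapping.keys n \<subseteq> meq V E"
  shows "Poly_Mapping.lookup (mono_exp (\<lambda>x. psi_mono Vs Es (fst (part x))) n) S =
     (if S \<in> Pow Vs then Poly_Mapping.lookup (mono_exp (psi_mono V E) n) S else 0)"
  by (rule mono_exp_restrict) (use assms KLu in blast)
lemma exp_v:
  assumes "Poly_Mapping.keys n \<subseteq> meq V E"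
  shows "Poly_Mapping.lookup (mono_exp (\<lambda>x. psi_mono Vt Et (snd (part x))) n) S =
     (if S \<in> Pow Vt then Poly_Mapping.lookup (mono_exp (psi_mono V E) n) S else 0)"
  by (rule mono_exp_restrict) (use assms KLv in blast)

abbreviation "Wv \<equiv> Inl ` meq Vs Es \<union> Inr ` meq Vt Et"
abbreviation "Xg \<equiv> (mono_map (\<lambda>a. Poly_Mapping.single (Inl a) 1) ` (char_imset_ideal Vs Es :: (pdg,'k::field) mpoly set) \<union>
              mono_map (\<lambda>b. Poly_Mapping.single (Inr b) 1) ` (char_imset_ideal Vt Et :: (pdg,'k) mpoly set))"

lemma binom:
  fixes m m' :: "pdg \<Rightarrow>\<^sub>0 nat"
  assumes km: "Poly_Mapping.keys m \<subseteq> meq V E" and km': "Poly_Mapping.keys m' \<subseteq> meq V E"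
    and eq: "mono_exp (psi_mono V E) m = mono_exp (psi_mono V E) m'"
  shows "Poly_Mapping.single (mono_exp (\<lambda>x. (\<lambda>(a, b). Poly_Mapping.single (Inl a) 1 + Poly_Mapping.single (Inr b) 1) (part x)) m) (1::'k::field)
       - Poly_Mapping.single (mono_exp (\<lambda>x. (\<lambda>(a, b). Poly_Mapping.single (Inl a) 1 + Poly_Mapping.single (Inr b) 1) (part x)) m') 1
       \<in> ideal_gen_in (poly_ring Wv) (Xg :: ((pdg + pdg), 'k) mpoly set)"
proof -
  define A where "A n = mono_exp (\<lambda>x. Poly_Mapping.single (Inl (fst (part x)) :: pdg + pdg) (1::nat)) n" for n
  define B where "B n = mono_exp (\<lambda>x. Poly_Mapping.single (Inr (snd (part x)) :: pdg + pdg) (1::nat)) n" for n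
  have fun_eq: "(\<lambda>x. (\<lambda>(a, b). Poly_Mapping.single (Inl a) 1 + Poly_Mapping.single (Inr b) 1) (part x)) =
     (\<lambda>x. Poly_Mapping.single (Inl (fst (part x)) :: pdg + pdg) (1::nat) + Poly_Mapping.single (Inr (snd (part x))) 1)"
    by (simp add: case_prod_unfold)
  have split: "mono_exp (\<lambda>x. (\<lambda>(a, b). Poly_Mapping.single (Inl a) 1 + Poly_Mapping.single (Inr b) 1) (part x)) n = A n + B n" for n
    unfolding fun_eq A_def B_def by (rule mono_exp_fun_add)
  define au where "au n = mono_exp (\<lambda>x. Poly_Mapping.single (fst (part x)) (1::nat)) n" for n
  define av where "av n = mono_exp (\<lambda>x. Poly_Mapping.single (snd (part x)) (1::nat)) n" for n
  have A_eq: "A n = mono_exp (\<lambda>a. Poly_Mapping.single (Inl a :: pdg + pdg) 1) (au n)" for n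
    unfolding A_def au_def mono_exp_compose by (simp only: mono_exp_single1)
  have B_eq: "B n = mono_exp (\<lambda>b. Poly_Mapping.single (Inr b :: pdg + pdg) 1) (av n)" for n
    unfolding B_def av_def mono_exp_compose by (simp only: mono_exp_single1)
  have keys_au: "Poly_Mapping.keys (au n) \<subseteq> meq Vs Es" if "Poly_Mapping.keys n \<subseteq> meq V E" for n
    using keys_mono_exp_single[of "\<lambda>x. fst (part x)" n] part_in1 that
    unfolding au_def by blast
  have keys_av: "Poly_Mapping.keys (av n) \<subseteq> meq Vt Et" if "Poly_Mapping.keys n \<subseteq> meq V E" for n
    using keys_mono_exp_single[of "\<lambda>x. snd (part x)" n] part_in2 that
    unfolding av_def by blast
  have keys_A: "Poly_Mapping.keys (A n) \<subseteq> Wv" if "Poly_Mapping.keys n \<subseteq> meq V E" for n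
    using keys_mono_exp_single[of "\<lambda>x. Inl (fst (part x)) :: pdg + pdg" n] part_in1 that
    unfolding A_def by blast
  have keys_B: "Poly_Mapping.keys (B n) \<subseteq> Wv" if "Poly_Mapping.keys n \<subseteq> meq V E" for n
    using keys_mono_exp_single[of "\<lambda>x. Inr (snd (part x)) :: pdg + pdg" n] part_in2 that
    unfolding B_def by blast
  have psiu: "mono_exp (psi_mono Vs Es) (au n) = mono_exp (\<lambda>x. psi_mono Vs Es (fst (part x))) n" for n
    unfolding au_def mono_exp_compose by (simp only: mono_exp_single1)
  have psiv: "mono_exp (psi_mono Vt Et) (av n) = mono_exp (\<lambda>x. psi_mono Vt Et (snd (part x))) n" for n
    unfolding av_def mono_exp_compose by (simp only: mono_exp_single1)
  have equ: "mono_exp (psi_mono Vs Es) (au m) = mono_exp (psi_mono Vs Es) (au m')"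
    unfolding psiu by (rule poly_mapping_eqI) (simp only: exp_u[OF km] exp_u[OF km'] eq)
  have eqv: "mono_exp (psi_mono Vt Et) (av m) = mono_exp (psi_mono Vt Et) (av m')"
    unfolding psiv by (rule poly_mapping_eqI) (simp only: exp_v[OF km] exp_v[OF km'] eq)
  let ?hu = "Poly_Mapping.single (au m) (1::'k) - Poly_Mapping.single (au m') 1"
  let ?hv = "Poly_Mapping.single (av m) (1::'k) - Poly_Mapping.single (av m') 1"
  have hu: "?hu \<in> char_imset_ideal Vs Es"
    unfolding char_imset_ideal_def
    using pr_diff[OF pr_single[OF keys_au[OF km]] pr_single[OF keys_au[OF km']]] equ
    by (simp add: mono_map_diff mono_map_single)
  have hv: "?hv \<in> char_imset_ideal Vt Et"
    unfolding char_imset_ideal_def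
    using pr_diff[OF pr_single[OF keys_av[OF km]] pr_single[OF keys_av[OF km']]] eqv
    by (simp add: mono_map_diff mono_map_single)
  have gu: "Poly_Mapping.single (A m) 1 - Poly_Mapping.single (A m') 1 \<in> (Xg :: ((pdg + pdg), 'k) mpoly set)"
  proof -
    have "mono_map (\<lambda>a. Poly_Mapping.single (Inl a :: pdg + pdg) 1) ?hu = Poly_Mapping.single (A m) 1 - Poly_Mapping.single (A m') 1"
      by (simp add: mono_map_diff mono_map_single A_eq)
    then show ?thesis by (intro UnI1 image_eqI[OF _ hu]) (rule sym)
  qed
  have gv: "Poly_Mapping.single (B m) 1 - Poly_Mapping.single (B m') 1 \<in> (Xg :: ((pdg + pdg), 'k) mpoly set)"
  proof -
    have "mono_map (\<lambda>b. Poly_Mapping.single (Inr b :: pdg + pdg) 1) ?hv = Poly_Mapping.single (B m) 1 - Poly_Mapping.single (B m') 1"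
      by (simp add: mono_map_diff mono_map_single B_eq)
    then show ?thesis by (intro UnI2 image_eqI[OF _ hv]) (rule sym)
  qed
  have ring: "Poly_Mapping.single (A m + B m) (1::'k) - Poly_Mapping.single (A m' + B m') 1 =
     Poly_Mapping.single (B m) 1 * (Poly_Mapping.single (A m) 1 - Poly_Mapping.single (A m') 1) +
     Poly_Mapping.single (A m') 1 * (Poly_Mapping.single (B m) 1 - Poly_Mapping.single (B m') 1)"
    by (simp add: mult_single algebra_simps)
  have p1: "Poly_Mapping.single (B m) 1 \<in> poly_ring Wv" by (rule pr_single[OF keys_B[OF km]])
  have p2: "Poly_Mapping.single (A m') 1 \<in> poly_ring Wv" by (rule pr_single[OF keys_A[OF km']])
  show ?thesis unfolding split ring
    by (rule pideal_add[OF pideal_mult[OF ideal_gen[OF gu] p1] pideal_mult[OF ideal_gen[OF gv] p2]])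
qed

lemma dir1:
  assumes f: "f \<in> (char_imset_ideal V E :: (pdg,'k::field) mpoly set)"
  shows "mono_map (\<lambda>P. Poly_Mapping.single (part P) 1) f \<in> toric_fiber_product (part ` meq V E)
     (meq Vs Es) (meq Vt Et) (char_imset_ideal Vs Es) (char_imset_ideal Vt Et)"
proof -
  have vf: "vars f \<subseteq> meq V E" and ker: "mono_map (psi_mono V E) f = 0"
    using f unfolding char_imset_ideal_def poly_ring_def by auto
  have "vars (mono_map (\<lambda>P. Poly_Mapping.single (part P) (1::nat)) f) \<subseteq> part ` meq V E"
    using vars_mono_map[of "\<lambda>P. Poly_Mapping.single (part P) (1::nat)" f] vf by auto
  then have pr: "mono_map (\<lambda>P. Poly_Mapping.single (part P) 1) f \<in> poly_ring (part ` meq V E)"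
    unfolding poly_ring_def by simp
  have comp: "mono_map (\<lambda>(a, b). Poly_Mapping.single (Inl a) 1 + Poly_Mapping.single (Inr b) 1)
      (mono_map (\<lambda>P. Poly_Mapping.single (part P) 1) f) =
      mono_map (\<lambda>x. (\<lambda>(a, b). Poly_Mapping.single (Inl a) 1 + Poly_Mapping.single (Inr b) 1) (part x)) f"
    unfolding mono_map_compose by (simp only: mono_exp_single1)
  have keysf: "m \<in> Poly_Mapping.keys f \<Longrightarrow> Poly_Mapping.keys m \<subseteq> meq V E" for m
    using vf unfolding vars_def by auto
  have "mono_map (\<lambda>x. (\<lambda>(a, b). Poly_Mapping.single (Inl a) 1 + Poly_Mapping.single (Inr b) 1) (part x)) f
     \<in> ideal_gen_in (poly_ring Wv) (Xg :: ((pdg + pdg), 'k) mpoly set)"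
    by (rule kernel_binomial[OF ker binom[OF keysf keysf]])
  then show ?thesis unfolding toric_fiber_product_def mem_Collect_eq comp using pr by blast
qed

lemma dir2:
  assumes g: "g \<in> toric_fiber_product (part ` meq V E)
     (meq Vs Es) (meq Vt Et) (char_imset_ideal Vs Es) (char_imset_ideal Vt Et :: (pdg,'k::field) mpoly set)"
  shows "g \<in> mono_map (\<lambda>P. Poly_Mapping.single (part P) 1) ` char_imset_ideal V E"
proof -
  have gQ: "vars g \<subseteq> part ` meq V E"
    and gI: "mono_map (\<lambda>(a, b). Poly_Mapping.single (Inl a) 1 + Poly_Mapping.single (Inr b) 1) g
        \<in> ideal_gen_in (poly_ring Wv) (Xg :: ((pdg + pdg), 'k) mpoly set)"
    using g unfolding toric_fiber_product_def poly_ring_def by auto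
  define ip where "ip = inv_into (meq V E) part"
  have ipq: "ip q \<in> meq V E" "part (ip q) = q" if "q \<in> part ` meq V E" for q
    unfolding ip_def using that by (auto intro: inv_into_into f_inv_into_f)
  define f where "f = mono_map (\<lambda>q. Poly_Mapping.single (ip q) (1::nat)) g"
  have fg: "mono_map (\<lambda>P. Poly_Mapping.single (part P) 1) f = g"
  proof -
    have "mono_map (\<lambda>P. Poly_Mapping.single (part P) 1) f = mono_map (\<lambda>q. Poly_Mapping.single (part (ip q)) 1) g"
      unfolding f_def mono_map_compose by (simp only: mono_exp_single1)
    also have "\<dots> = mono_map (\<lambda>q. Poly_Mapping.single q 1) g"
    proof (rule mono_map_cong)
      fix x assume "x \<in> vars g"
      then have "x \<in> part ` meq V E" using gQ by blast
      then show "Poly_Mapping.single (part (ip x)) 1 = Poly_Mapping.single x 1" using ipq(2) by metis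
    qed
    also have "\<dots> = g" by (rule mono_map_id)
    finally show ?thesis .
  qed
  have fM: "vars f \<subseteq> meq V E"
  proof -
    have "vars f \<subseteq> (\<Union>x\<in>vars g. Poly_Mapping.keys (Poly_Mapping.single (ip x) (1::nat)))"
      unfolding f_def by (rule vars_mono_map)
    also have "\<dots> = ip ` vars g" by (simp add: UNION_singleton_eq_range)
    also have "\<dots> \<subseteq> meq V E" using ipq(1) gQ by blast
    finally show ?thesis .
  qed
  define \<theta> where "\<theta> z = (case z of Inl a \<Rightarrow> psi_mono Vs Es a | Inr b \<Rightarrow> psi_mono Vt Et b)" for z
  define \<kappa> where "\<kappa> q = psi_mono Vs Es (fst q) + psi_mono Vt Et (snd q)" for q
  have kill: "mono_map \<theta> x = 0" if x: "x \<in> (Xg :: ((pdg + pdg), 'k) mpoly set)" for x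
  proof -
    from x show ?thesis
    proof
      assume "x \<in> mono_map (\<lambda>a. Poly_Mapping.single (Inl a) 1) ` (char_imset_ideal Vs Es :: (pdg,'k) mpoly set)"
      then obtain i where i: "i \<in> (char_imset_ideal Vs Es :: (pdg,'k) mpoly set)" "x = mono_map (\<lambda>a. Poly_Mapping.single (Inl a) 1) i" by blast
      have "mono_map \<theta> x = mono_map (psi_mono Vs Es) i"
        unfolding i(2) mono_map_compose by (simp only: mono_exp_single1 \<theta>_def sum.case)
      then show ?thesis using i(1) unfolding char_imset_ideal_def by simp
    next
      assume "x \<in> mono_map (\<lambda>b. Poly_Mapping.single (Inr b) 1) ` (char_imset_ideal Vt Et :: (pdg,'k) mpoly set)"
      then obtain i where i: "i \<in> (char_imset_ideal Vt Et :: (pdg,'k) mpoly set)" "x = mono_map (\<lambda>b. Poly_Mapping.single (Inr b) 1) i" by blast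
      have "mono_map \<theta> x = mono_map (psi_mono Vt Et) i"
        unfolding i(2) mono_map_compose by (simp only: mono_exp_single1 \<theta>_def sum.case)
      then show ?thesis using i(1) unfolding char_imset_ideal_def by simp
    qed
  qed
  have k0: "mono_map \<theta> (mono_map (\<lambda>(a, b). Poly_Mapping.single (Inl a) 1 + Poly_Mapping.single (Inr b) 1) g) = 0"
    by (rule ideal_killed[OF gI kill])
  have funeq: "(\<lambda>q. mono_exp \<theta> ((\<lambda>(a, b). Poly_Mapping.single (Inl a) 1 + Poly_Mapping.single (Inr b) 1) q)) = \<kappa>"
  proof
    fix q :: "pdg \<times> pdg"
    obtain a b where q: "q = (a, b)" by (cases q)
    show "mono_exp \<theta> ((\<lambda>(a, b). Poly_Mapping.single (Inl a) 1 + Poly_Mapping.single (Inr b) 1) q) = \<kappa> q"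
      unfolding q by (simp only: case_prod_conv mono_exp_add mono_exp_single1 \<theta>_def \<kappa>_def sum.case fst_conv snd_conv)
  qed
  have kerk: "mono_map \<kappa> g = (0 :: ((nat set), 'k) mpoly)"
    using k0 unfolding mono_map_compose funeq .
  define N where "N n = mono_exp (\<lambda>q. psi_mono V E (ip q)) n" for n
  have form: "Poly_Mapping.lookup (mono_exp \<kappa> n) S =
      (if S \<in> Pow Vs then Poly_Mapping.lookup (N n) S else 0) + (if S \<in> Pow Vt then Poly_Mapping.lookup (N n) S else 0)"
    if n: "Poly_Mapping.keys n \<subseteq> part ` meq V E" for n S
  proof -
    have "mono_exp \<kappa> n = mono_exp (\<lambda>q. psi_mono Vs Es (fst q)) n + mono_exp (\<lambda>q. psi_mono Vt Et (snd q)) n"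
      unfolding \<kappa>_def by (rule mono_exp_fun_add)
    moreover have "Poly_Mapping.lookup (mono_exp (\<lambda>q. psi_mono Vs Es (fst q)) n) S =
        (if S \<in> Pow Vs then Poly_Mapping.lookup (N n) S else 0)"
      unfolding N_def
    proof (rule mono_exp_restrict)
      fix q assume "q \<in> Poly_Mapping.keys n"
      then have "q \<in> part ` meq V E" using n by blast
      then have q: "ip q \<in> meq V E" "part (ip q) = q" using ipq by blast+
      show "Poly_Mapping.lookup (psi_mono Vs Es (fst q)) S = (if S \<in> Pow Vs then Poly_Mapping.lookup (psi_mono V E (ip q)) S else 0)"
        using KLu[OF q(1), of S] q(2) by simp
    qed
    moreover have "Poly_Mapping.lookup (mono_exp (\<lambda>q. psi_mono Vt Et (snd q)) n) S =
        (if S \<in> Pow Vt then Poly_Mapping.lookup (N n) S else 0)"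
      unfolding N_def
    proof (rule mono_exp_restrict)
      fix q assume "q \<in> Poly_Mapping.keys n"
      then have "q \<in> part ` meq V E" using n by blast
      then have q: "ip q \<in> meq V E" "part (ip q) = q" using ipq by blast+
      show "Poly_Mapping.lookup (psi_mono Vt Et (snd q)) S = (if S \<in> Pow Vt then Poly_Mapping.lookup (psi_mono V E (ip q)) S else 0)"
        using KLv[OF q(1), of S] q(2) by simp
    qed
    ultimately show ?thesis by (simp add: lookup_add)
  qed
  have keysN: "S \<subseteq> Vs \<or> S \<subseteq> Vt" if n: "Poly_Mapping.keys n \<subseteq> part ` meq V E" and S: "S \<in> Poly_Mapping.keys (N n)" for n S
  proof -
    obtain q where q: "q \<in> Poly_Mapping.keys n" "S \<in> Poly_Mapping.keys (psi_mono V E (ip q))"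
      using S keys_mono_exp[of "\<lambda>q. psi_mono V E (ip q)" n] unfolding N_def by blast
    have "q \<in> part ` meq V E" using q(1) n by blast
    then have "ip q \<in> meq V E" using ipq by blast
    then show ?thesis using keys_psi_side[OF T e uv _ q(2)] by blast
  qed
  have kg: "Poly_Mapping.keys m \<subseteq> part ` meq V E" if "m \<in> Poly_Mapping.keys g" for m
    using that gQ unfolding vars_def by auto
  have psi0: "mono_map (\<lambda>q. psi_mono V E (ip q)) g = 0"
  proof (rule kernel_transfer[OF kerk])
    fix m m' assume m: "m \<in> Poly_Mapping.keys g" and m': "m' \<in> Poly_Mapping.keys g"
    show "mono_exp \<kappa> m = mono_exp \<kappa> m' \<longleftrightarrow> mono_exp (\<lambda>q. psi_mono V E (ip q)) m = mono_exp (\<lambda>q. psi_mono V E (ip q)) m'"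
    proof
      assume eq: "mono_exp \<kappa> m = mono_exp \<kappa> m'"
      show "mono_exp (\<lambda>q. psi_mono V E (ip q)) m = mono_exp (\<lambda>q. psi_mono V E (ip q)) m'"
      proof (rule poly_mapping_eqI)
        fix S
        have e: "Poly_Mapping.lookup (mono_exp \<kappa> m) S = Poly_Mapping.lookup (mono_exp \<kappa> m') S" using eq by simp
        show "Poly_Mapping.lookup (mono_exp (\<lambda>q. psi_mono V E (ip q)) m) S = Poly_Mapping.lookup (mono_exp (\<lambda>q. psi_mono V E (ip q)) m') S"
        proof (cases "S \<subseteq> Vs \<or> S \<subseteq> Vt")
          case True
          then show ?thesis using e unfolding form[OF kg[OF m]] form[OF kg[OF m']] N_def
            by (auto split: if_splits)
        next
          case False
          then have "S \<notin> Poly_Mapping.keys (N m)" "S \<notin> Poly_Mapping.keys (N m')"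
            using keysN[OF kg[OF m]] keysN[OF kg[OF m']] by blast+
          then show ?thesis unfolding N_def by (simp add: in_keys_iff)
        qed
      qed
    next
      assume eq: "mono_exp (\<lambda>q. psi_mono V E (ip q)) m = mono_exp (\<lambda>q. psi_mono V E (ip q)) m'"
      show "mono_exp \<kappa> m = mono_exp \<kappa> m'"
        by (rule poly_mapping_eqI) (simp only: form[OF kg[OF m]] form[OF kg[OF m']] N_def eq)
    qed
  qed
  have "mono_map (psi_mono V E) f = 0"
    unfolding f_def mono_map_compose using psi0 by (simp only: mono_exp_single1)
  then have "f \<in> char_imset_ideal V E" unfolding char_imset_ideal_def poly_ring_def using fM by simp
  then show ?thesis using fg by blast
qed

end


theorem theorem4p4:
  fixes p u v :: nat and E :: "nat set set"
  assumes "is_tree {1..p} E"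
    and "non_leaf_edge E u v"
  shows "mono_map (\<lambda>P. Poly_Mapping.single (parting {1..p} E u v P) 1)
            ` (char_imset_ideal {1..p} E :: (pdg, 'k::field) mpoly set)
       = toric_fiber_product
           (parting {1..p} E u v ` meq {1..p} E)
           (meq (side_vertices {1..p} E u v) (side_edges {1..p} E u v))
           (meq (side_vertices {1..p} E v u) (side_edges {1..p} E v u))
           (char_imset_ideal (side_vertices {1..p} E u v) (side_edges {1..p} E u v))
           (char_imset_ideal (side_vertices {1..p} E v u) (side_edges {1..p} E v u))"
proof -
  have e: "{u, v} \<in> E" and uv: "u \<noteq> v" using assms(2) unfolding non_leaf_edge_def by auto
  interpret tree_edge "{1..p}" E u v using assms(1) e uv by unfold_locales
  show ?thesis
  proof (rule equalityI)
    show "mono_map (\<lambda>P. Poly_Mapping.single (parting {1..p} E u v P) 1)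
            ` (char_imset_ideal {1..p} E :: (pdg, 'k::field) mpoly set) \<subseteq> toric_fiber_product
           (parting {1..p} E u v ` meq {1..p} E)
           (meq (side_vertices {1..p} E u v) (side_edges {1..p} E u v))
           (meq (side_vertices {1..p} E v u) (side_edges {1..p} E v u))
           (char_imset_ideal (side_vertices {1..p} E u v) (side_edges {1..p} E u v))
           (char_imset_ideal (side_vertices {1..p} E v u) (side_edges {1..p} E v u))"
      using dir1 by blast
  next
    show "toric_fiber_product
           (parting {1..p} E u v ` meq {1..p} E)
           (meq (side_vertices {1..p} E u v) (side_edges {1..p} E u v))
           (meq (side_vertices {1..p} E v u) (side_edges {1..p} E v u))
           (char_imset_ideal (side_vertices {1..p} E u v) (side_edges {1..p} E u v))
           (char_imset_ideal (side_vertices {1..p} E v u) (side_edges {1..p} E v u)) \<subseteq>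
          mono_map (\<lambda>P. Poly_Mapping.single (parting {1..p} E u v P) 1)
            ` (char_imset_ideal {1..p} E :: (pdg, 'k::field) mpoly set)"
      using dir2 by blast
  qed
qed

end
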